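(* Let $\{\mathcal J_i\}_{i=1}^m$ be a partition of $\{1,\dots,n\}$ into consecutive intervals listed in increasing order, $|\mathcal J_i|=d(i)$, let $P_i$ be the orthogonal projection onto $\mathrm{span}\{e_k:k\in\mathcal J_i\}$, and let $\mathcal C_{\mathcal P}(X)=\sum_{i=1}^m P_iXP_i$ for $X\in\mathcal M_n(\mathbb C)$. Then the following are equivalent: (1) the set $\mathcal C_{\mathcal P}(\mathcal U_n(S))=\{\mathcal C_{\mathcal P}(U^*SU):U\in\mathcal M_n(\mathbb C)\text{ unitary}\}$ is convex for every positive semidefinite $S\in\mathcal M_n(\mathbb C)$; (2) $d(i)=1$ for every $1\le i\le m$ (and hence $m=n$). *)

theory Defs
  imports "Jordan_Normal_Form.Schur_Decomposition"
begin

text \<open>Complex n x n matrices are Jordan_Normal_Form matrices in carrier_mat n n.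
  Indices are 0-based: the paper's index k in 1..n corresponds to k-1 here.\<close>

definition unitary_mat :: "nat \<Rightarrow> complex mat \<Rightarrow> bool" where
  "unitary_mat n U \<longleftrightarrow> U \<in> carrier_mat n n \<and>
     mat_adjoint U * U = 1\<^sub>m n \<and> U * mat_adjoint U = 1\<^sub>m n"

definition psd_mat :: "nat \<Rightarrow> complex mat \<Rightarrow> bool" where
  "psd_mat n S \<longleftrightarrow> S \<in> carrier_mat n n \<and> mat_adjoint S = S \<and>
     (\<forall>x \<in> carrier_vec n. Im (conjugate x \<bullet> (S *\<^sub>v x)) = 0 \<and>
                         Re (conjugate x \<bullet> (S *\<^sub>v x)) \<ge> 0)"

text \<open>A partition of {0..<n} into consecutive intervals in increasing order is given
  by the list d of block sizes d(1),...,d(m) (all positive, summing to n).\<close>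
definition block_start :: "nat list \<Rightarrow> nat \<Rightarrow> nat" where
  "block_start d i = sum_list (take i d)"

definition block :: "nat list \<Rightarrow> nat \<Rightarrow> nat set" where
  "block d i = {block_start d i ..< block_start d i + d ! i}"

definition block_proj :: "nat \<Rightarrow> nat list \<Rightarrow> nat \<Rightarrow> complex mat" where
  "block_proj n d i = mat n n (\<lambda>(j, k). if j = k \<and> j \<in> block d i then 1 else 0)"

definition pinching :: "nat \<Rightarrow> nat list \<Rightarrow> complex mat \<Rightarrow> complex mat" where
  "pinching n d X = foldr (+) (map (\<lambda>i. block_proj n d i * X * block_proj n d i) [0..<length d])
                      (0\<^sub>m n n)"

definition unitary_orbit :: "nat \<Rightarrow> complex mat \<Rightarrow> complex mat set" where
  "unitary_orbit n S = {mat_adjoint U * S * U | U. unitary_mat n U}"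

definition convex_mat_set :: "complex mat set \<Rightarrow> bool" where
  "convex_mat_set A \<longleftrightarrow> (\<forall>X \<in> A. \<forall>Y \<in> A. \<forall>t::real. 0 \<le> t \<and> t \<le> 1 \<longrightarrow>
      complex_of_real (1 - t) \<cdot>\<^sub>m X + complex_of_real t \<cdot>\<^sub>m Y \<in> A)"

end

theory Submission
  imports Defs
begin

lemma adj_eq: "mat_adjoint (A::complex mat) = mat (dim_col A) (dim_row A) (\<lambda>(i,j). cnj (A $$ (j,i)))"
  unfolding mat_adjoint_def mat_of_rows_def
  by (rule eq_matI, auto)
lemma adj_dims[simp]: "dim_row (mat_adjoint (A::complex mat)) = dim_col A"
  "dim_col (mat_adjoint (A::complex mat)) = dim_row A"
  unfolding adj_eq by simp_all
lemma adj_carrier[simp]: "A \<in> carrier_mat n m \<Longrightarrow> mat_adjoint (A::complex mat) \<in> carrier_mat m n"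
  by (rule carrier_matI) auto
lemma adj_index[simp]: "i < dim_col A \<Longrightarrow> j < dim_row A \<Longrightarrow>
   mat_adjoint (A::complex mat) $$ (i,j) = cnj (A $$ (j,i))"
  unfolding adj_eq by (rule trans[OF index_mat(1)]) auto
lemma adj_adj[simp]: "mat_adjoint (mat_adjoint (A::complex mat)) = A"
  by (rule eq_matI) auto
lemma mult_entry: "A \<in> carrier_mat n m \<Longrightarrow> B \<in> carrier_mat m p \<Longrightarrow> i < n \<Longrightarrow> j < p \<Longrightarrow>
  (A * B) $$ (i,j) = (\<Sum>k<m. A $$ (i,k) * B $$ (k,j))"
  by (simp add: scalar_prod_def atLeast0LessThan)

lemma adj_mult: assumes "A \<in> carrier_mat n m" "B \<in> carrier_mat m p"
  shows "mat_adjoint (A * B :: complex mat) = mat_adjoint B * mat_adjoint A"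
proof (rule eq_matI)
  fix i j assume i: "i < dim_row (mat_adjoint B * mat_adjoint A)" and j: "j < dim_col (mat_adjoint B * mat_adjoint A)"
  have i': "i < p" and j': "j < n" using i j assms by auto
  have "mat_adjoint (A * B) $$ (i,j) = cnj ((A*B) $$ (j,i))" using i' j' assms by simp
  also have "\<dots> = (\<Sum>k<m. cnj (B $$ (k,i)) * cnj (A $$ (j,k)))"
    using mult_entry[OF assms j' i'] by (simp add: mult.commute)
  also have "\<dots> = (mat_adjoint B * mat_adjoint A) $$ (i,j)"
    by (subst mult_entry[of _ p m _ n], insert assms i' j', auto)
  finally show "mat_adjoint (A * B) $$ (i,j) = (mat_adjoint B * mat_adjoint A) $$ (i,j)" .
qed (use assms in simp_all)
lemma adj_one[simp]: "mat_adjoint (1\<^sub>m n :: complex mat) = 1\<^sub>m n"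
  by (rule eq_matI) auto

lemma unitary_one: "unitary_mat n (1\<^sub>m n)"
  unfolding unitary_mat_def by simp

lemma unitary_carrier: "unitary_mat n U \<Longrightarrow> U \<in> carrier_mat n n"
  unfolding unitary_mat_def by simp

lemma unitary_mult: assumes "unitary_mat n U" "unitary_mat n V" shows "unitary_mat n (U * V)"
proof -
  have U: "U \<in> carrier_mat n n" and V: "V \<in> carrier_mat n n" using assms unitary_carrier by auto
  have aU: "mat_adjoint U \<in> carrier_mat n n" and aV: "mat_adjoint V \<in> carrier_mat n n" using U V by auto
  have UU: "mat_adjoint U * U = 1\<^sub>m n" "U * mat_adjoint U = 1\<^sub>m n"
   and VV: "mat_adjoint V * V = 1\<^sub>m n" "V * mat_adjoint V = 1\<^sub>m n"
    using assms unfolding unitary_mat_def by auto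
  have "mat_adjoint (U*V) * (U*V) = mat_adjoint V * (mat_adjoint U * (U * V))"
    unfolding adj_mult[OF U V] using aV aU U V by (meson assoc_mult_mat mult_carrier_mat)
  also have "mat_adjoint U * (U * V) = (mat_adjoint U * U) * V"
    using assoc_mult_mat[OF aU U V] by simp
  also have "\<dots> = V" unfolding UU(1) using V by (rule left_mult_one_mat)
  finally have 1: "mat_adjoint (U*V) * (U*V) = 1\<^sub>m n" using VV(1) by simp
  have UVc: "U * V \<in> carrier_mat n n" using U V by simp
  show ?thesis using 1 UVc mat_mult_left_right_inverse[of "mat_adjoint (U*V)" n "U*V"]
    unfolding unitary_mat_def by auto
qed

lemma unitary_adj: "unitary_mat n U \<Longrightarrow> unitary_mat n (mat_adjoint U)"
  unfolding unitary_mat_def by auto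

lemma unitary_from_left: assumes "U \<in> carrier_mat n n" "mat_adjoint U * U = 1\<^sub>m n"
  shows "unitary_mat n U"
  using assms mat_mult_left_right_inverse[of "mat_adjoint U" n U] unfolding unitary_mat_def by auto
lemma triple_entry: assumes X: "X \<in> carrier_mat n n" and B: "B \<in> carrier_mat n n" and Y: "Y \<in> carrier_mat n n"
    and i: "i < n" and j: "j < n"
  shows "(mat_adjoint X * B * Y) $$ (i,j) = (\<Sum>k<n. \<Sum>l<n. cnj (X $$ (k,i)) * B $$ (k,l) * Y $$ (l,j))"
proof -
  have aX: "mat_adjoint X \<in> carrier_mat n n" using X by simp
  have XB: "mat_adjoint X * B \<in> carrier_mat n n" using aX B by simp
  have "(mat_adjoint X * B * Y) $$ (i,j) = (\<Sum>l<n. (mat_adjoint X * B) $$ (i,l) * Y $$ (l,j))"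
    by (rule mult_entry[OF XB Y i j])
  also have "\<dots> = (\<Sum>l<n. \<Sum>k<n. cnj (X $$ (k,i)) * B $$ (k,l) * Y $$ (l,j))"
  proof (rule sum.cong[OF refl])
    fix l assume l: "l \<in> {..<n}"
    have "(mat_adjoint X * B) $$ (i,l) = (\<Sum>k<n. mat_adjoint X $$ (i,k) * B $$ (k,l))"
      using mult_entry[OF aX B i] l by simp
    also have "\<dots> = (\<Sum>k<n. cnj (X $$ (k,i)) * B $$ (k,l))"
      by (rule sum.cong[OF refl], use X i in auto)
    finally show "(mat_adjoint X * B) $$ (i,l) * Y $$ (l,j) = (\<Sum>k<n. cnj (X $$ (k,i)) * B $$ (k,l) * Y $$ (l,j))"
      by (simp add: sum_distrib_right)
  qed
  also have "\<dots> = (\<Sum>k<n. \<Sum>l<n. cnj (X $$ (k,i)) * B $$ (k,l) * Y $$ (l,j))"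
    by (rule sum.swap)
  finally show ?thesis .
qed


lemma foldr_add_entry:
  assumes "\<forall>i \<in> set xs. f i \<in> carrier_mat n n" "j < n" "k < n"
  shows "foldr (+) (map f xs) (0\<^sub>m n n) \<in> carrier_mat n n \<and>
         foldr (+) (map f xs) (0\<^sub>m n n) $$ (j,k) = sum_list (map (\<lambda>i. f i $$ (j,k)) xs)"
  using assms by (induction xs) auto

lemma block_proj_index: "j < n \<Longrightarrow> k < n \<Longrightarrow> block_proj n d i $$ (j,k) = (if j = k \<and> j \<in> block d i then 1 else 0)"
  unfolding block_proj_def by simp

lemma block_proj_carrier: "block_proj n d i \<in> carrier_mat n n"
  unfolding block_proj_def by simp

lemma proj_entry: assumes X: "X \<in> carrier_mat n n" and j: "j < n" and k: "k < n"
  shows "(block_proj n d i * X * block_proj n d i) $$ (j,k) =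
    (if j \<in> block d i \<and> k \<in> block d i then X $$ (j,k) else 0)"
proof -
  let ?P = "block_proj n d i"
  have P: "?P \<in> carrier_mat n n" by (rule block_proj_carrier)
  have PX: "?P * X \<in> carrier_mat n n" using P X by simp
  have 1: "(?P * X) $$ (j,b) = (if j \<in> block d i then X $$ (j,b) else 0)" if b: "b < n" for b
  proof -
    have "(?P * X) $$ (j,b) = (\<Sum>a<n. ?P $$ (j,a) * X $$ (a,b))" by (rule mult_entry[OF P X j b])
    also have "\<dots> = (\<Sum>a<n. if a = j then (if j \<in> block d i then X $$ (j,b) else 0) else 0)"
      by (rule sum.cong[OF refl], use j b in \<open>auto simp: block_proj_index\<close>)
    also have "\<dots> = (if j \<in> block d i then X $$ (j,b) else 0)" using j by simp
    finally show ?thesis .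
  qed
  have "(?P * X * ?P) $$ (j,k) = (\<Sum>b<n. (?P * X) $$ (j,b) * ?P $$ (b,k))" by (rule mult_entry[OF PX P j k])
  also have "\<dots> = (\<Sum>b<n. if b = k then (if j \<in> block d i \<and> k \<in> block d i then X $$ (j,k) else 0) else 0)"
    by (rule sum.cong[OF refl], use k in \<open>auto simp: block_proj_index 1\<close>)
  also have "\<dots> = (if j \<in> block d i \<and> k \<in> block d i then X $$ (j,k) else 0)" using k by simp
  finally show ?thesis .
qed

lemma foldr_add_carrier: "\<forall>i \<in> set xs. f i \<in> carrier_mat n n \<Longrightarrow>
   foldr (+) (map f xs) (0\<^sub>m n n) \<in> carrier_mat n n"
  by (induction xs) auto

lemma pinching_carrier: "X \<in> carrier_mat n n \<Longrightarrow> pinching n d X \<in> carrier_mat n n"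
  unfolding pinching_def by (rule foldr_add_carrier) (auto intro!: mult_carrier_mat block_proj_carrier)

lemma pinching_entry_sum: assumes X: "X \<in> carrier_mat n n" and j: "j < n" and k: "k < n"
  shows "pinching n d X $$ (j,k) = (\<Sum>i<length d. if j \<in> block d i \<and> k \<in> block d i then X $$ (j,k) else 0)"
proof -
  have c: "\<forall>i\<in>set [0..<length d]. block_proj n d i * X * block_proj n d i \<in> carrier_mat n n"
    using X by (auto intro!: mult_carrier_mat block_proj_carrier)
  have "pinching n d X $$ (j,k) = sum_list (map (\<lambda>i. (block_proj n d i * X * block_proj n d i) $$ (j,k)) [0..<length d])"
    unfolding pinching_def using foldr_add_entry[OF c j k] by simp
  also have "\<dots> = (\<Sum>i<length d. (block_proj n d i * X * block_proj n d i) $$ (j,k))"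
    by (simp add: sum_list_sum_nth atLeast0LessThan)
  also have "\<dots> = (\<Sum>i<length d. if j \<in> block d i \<and> k \<in> block d i then X $$ (j,k) else 0)"
    by (rule sum.cong[OF refl], rule proj_entry[OF X j k])
  finally show ?thesis .
qed

lemma block_start_Suc: "i < length d \<Longrightarrow> block_start d (Suc i) = block_start d i + d ! i"
  unfolding block_start_def by (simp add: take_Suc_conv_app_nth)

lemma block_start_mono: "i \<le> i' \<Longrightarrow> block_start d i \<le> block_start d i'"
proof -
  assume "i \<le> i'"
  then obtain k where "i' = i + k" using le_Suc_ex by blast
  then have "take i' d = take i d @ take k (drop i d)" by (simp add: take_add)
  then show ?thesis unfolding block_start_def by simp
qed

lemma block_end_le: "i < length d \<Longrightarrow> block_start d i + d ! i \<le> sum_list d"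
proof -
  assume i: "i < length d"
  have "block_start d i + d ! i = block_start d (Suc i)" using block_start_Suc[OF i] by simp
  also have "\<dots> \<le> block_start d (length d)" using i by (intro block_start_mono) simp
  also have "\<dots> = sum_list d" unfolding block_start_def by simp
  finally show ?thesis .
qed

lemma block_unique_aux: assumes ab: "a < b" "b < length d" "j \<in> block d a" "j \<in> block d b"
  shows False
proof -
  have "block_start d a + d ! a = block_start d (Suc a)" using ab block_start_Suc by simp
  also have "\<dots> \<le> block_start d b" using ab by (intro block_start_mono) simp
  finally show False using ab(3,4) unfolding block_def by simp
qed

lemma block_unique: assumes "i < length d" "i' < length d" "j \<in> block d i" "j \<in> block d i'"
  shows "i = i'"
proof (rule linorder_cases[of i i'])
  assume "i < i'" then show ?thesis using block_unique_aux assms by blast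
next
  assume "i' < i" then show ?thesis using block_unique_aux assms by blast
qed

lemma pinching_entry: assumes X: "X \<in> carrier_mat n n" and j: "j < n" and k: "k < n"
  shows "pinching n d X $$ (j,k) = (if \<exists>i<length d. j \<in> block d i \<and> k \<in> block d i then X $$ (j,k) else 0)"
proof (cases "\<exists>i<length d. j \<in> block d i \<and> k \<in> block d i")
  case True
  then obtain i0 where i0: "i0 < length d" "j \<in> block d i0" "k \<in> block d i0" by auto
  have "pinching n d X $$ (j,k) = (\<Sum>i<length d. if i = i0 then X $$ (j,k) else 0)"
    unfolding pinching_entry_sum[OF X j k]
  proof (rule sum.cong[OF refl])
    fix i assume "i \<in> {..<length d}"
    then have "i < length d" by simp
    then have "(j \<in> block d i \<and> k \<in> block d i) = (i = i0)" using i0 block_unique[of i d i0 j] by auto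
    then show "(if j \<in> block d i \<and> k \<in> block d i then X $$ (j,k) else 0) = (if i = i0 then X $$ (j,k) else 0)"
      by simp
  qed
  also have "\<dots> = X $$ (j,k)" using i0 by simp
  finally show ?thesis using True by simp
next
  case False
  have "(\<Sum>i<length d. if j \<in> block d i \<and> k \<in> block d i then X $$ (j,k) else 0) = 0"
    by (rule sum.neutral) (use False in auto)
  then show ?thesis unfolding pinching_entry_sum[OF X j k] using False by (simp only: if_False) 
qed

lemma ones_block_start: "\<forall>i<length d. d ! i = 1 \<Longrightarrow> i \<le> length d \<Longrightarrow> block_start d i = i"
  by (induction i) (auto simp: block_start_Suc, simp add: block_start_def)

lemma ones_block: "\<forall>i<length d. d ! i = 1 \<Longrightarrow> i < length d \<Longrightarrow> block d i = {i}"
  unfolding block_def using ones_block_start[of d i] by auto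

lemma pinching_ones_entry: assumes d: "\<forall>i<length d. d ! i = 1" and X: "X \<in> carrier_mat n n"
  and n: "n = length d" and j: "j < n" and k: "k < n"
  shows "pinching n d X $$ (j,k) = (if j = k then X $$ (j,j) else 0)"
  unfolding pinching_entry[OF X j k] using ones_block[OF d] j k n by auto



definition perm_mat :: "nat \<Rightarrow> (nat \<Rightarrow> nat) \<Rightarrow> complex mat" where
  "perm_mat n \<sigma> = mat n n (\<lambda>(i,j). if i = \<sigma> j then 1 else 0)"

lemma perm_mat_carrier: "perm_mat n \<sigma> \<in> carrier_mat n n"
  unfolding perm_mat_def by simp

lemma perm_conj: assumes s: "\<sigma> permutes {..<n}" and A: "A \<in> carrier_mat n n" and i: "i < n" and j: "j < n"
  shows "(mat_adjoint (perm_mat n \<sigma>) * A * perm_mat n \<sigma>) $$ (i,j) = A $$ (\<sigma> i, \<sigma> j)"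
proof -
  let ?P = "perm_mat n \<sigma>"
  have si: "\<sigma> i < n" and sj: "\<sigma> j < n" using permutes_in_image[OF s] i j by auto
  have Pe: "\<And>k l. k < n \<Longrightarrow> l < n \<Longrightarrow> ?P $$ (k,l) = (if k = \<sigma> l then 1 else 0)"
    unfolding perm_mat_def by simp
  have "(mat_adjoint ?P * A * ?P) $$ (i,j) = (\<Sum>k<n. \<Sum>l<n. cnj (?P $$ (k,i)) * A $$ (k,l) * ?P $$ (l,j))"
    by (rule triple_entry[OF perm_mat_carrier A perm_mat_carrier i j])
  also have "\<dots> = (\<Sum>k<n. if k = \<sigma> i then A $$ (k, \<sigma> j) else 0)"
  proof (rule sum.cong[OF refl])
    fix k assume k: "k \<in> {..<n}"
    have "(\<Sum>l<n. cnj (?P $$ (k,i)) * A $$ (k,l) * ?P $$ (l,j)) =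
          (\<Sum>l<n. if l = \<sigma> j then cnj (?P $$ (k,i)) * A $$ (k,l) else 0)"
      by (rule sum.cong[OF refl]) (use j in \<open>simp add: Pe\<close>)
    also have "\<dots> = cnj (?P $$ (k,i)) * A $$ (k,\<sigma> j)" using sj by simp
    also have "\<dots> = (if k = \<sigma> i then A $$ (k, \<sigma> j) else 0)" using k i by (simp add: Pe)
    finally show "(\<Sum>l<n. cnj (?P $$ (k,i)) * A $$ (k,l) * ?P $$ (l,j)) = (if k = \<sigma> i then A $$ (k, \<sigma> j) else 0)" .
  qed
  also have "\<dots> = A $$ (\<sigma> i, \<sigma> j)" using si by simp
  finally show ?thesis .
qed

lemma perm_unitary: assumes s: "\<sigma> permutes {..<n}" shows "unitary_mat n (perm_mat n \<sigma>)"
proof (rule unitary_from_left[OF perm_mat_carrier])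
  let ?P = "perm_mat n \<sigma>"
  have aP: "mat_adjoint ?P \<in> carrier_mat n n" using perm_mat_carrier by simp
  have "mat_adjoint ?P * ?P = mat_adjoint ?P * 1\<^sub>m n * ?P" using right_mult_one_mat[OF aP] by simp
  also have "\<dots> = 1\<^sub>m n"
  proof (rule eq_matI)
    fix i j assume "i < dim_row (1\<^sub>m n :: complex mat)" "j < dim_col (1\<^sub>m n :: complex mat)"
    then have i: "i < n" and j: "j < n" by auto
    have "(mat_adjoint ?P * 1\<^sub>m n * ?P) $$ (i,j) = (1\<^sub>m n :: complex mat) $$ (\<sigma> i, \<sigma> j)"
      by (rule perm_conj[OF s one_carrier_mat i j])
    also have "\<dots> = (if i = j then 1 else 0)"
      using permutes_in_image[OF s] i j permutes_inj_on[OF s, of UNIV] by (auto simp: inj_on_def)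
    finally show "(mat_adjoint ?P * 1\<^sub>m n * ?P) $$ (i,j) = (1\<^sub>m n :: complex mat) $$ (i,j)" using i j by simp
  qed (use aP perm_mat_carrier in auto)
  finally show "mat_adjoint ?P * ?P = 1\<^sub>m n" .
qed



definition dec :: "nat \<Rightarrow> (nat \<Rightarrow> real) \<Rightarrow> bool" where
  "dec n x \<longleftrightarrow> (\<forall>p q. p \<le> q \<longrightarrow> q < n \<longrightarrow> x q \<le> x p)"

definition psum :: "(nat \<Rightarrow> real) \<Rightarrow> nat \<Rightarrow> real" where
  "psum x l = (\<Sum>k<l. x k)"

lemma sort_exists: "\<exists>\<sigma>. \<sigma> permutes {..<n} \<and> dec n (y \<circ> \<sigma>)"
proof -
  define xs where "xs = sort_key (\<lambda>i. - y i) [0..<n]"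
  have m: "mset xs = mset [0..<n]" unfolding xs_def by simp
  obtain p where p: "p permutes {..<length [0..<n]}" "permute_list p [0..<n] = xs"
    using mset_eq_permutation[OF m] by blast
  have pn: "p permutes {..<n}" using p by simp
  have len: "length xs = n" using m by (metis length_upt minus_nat.diff_0 size_mset)
  have xsi: "xs ! i = p i" if "i < n" for i
  proof -
    have "xs ! i = [0..<n] ! p i" using p permute_list_nth[of p "[0..<n]" i] that by simp
    also have "\<dots> = p i" using permutes_in_image[OF pn] that by simp
    finally show ?thesis .
  qed
  have s: "sorted (map (\<lambda>i. - y i) xs)" unfolding xs_def by (rule sorted_sort_key)
  have "dec n (y \<circ> p)" unfolding dec_def
  proof (intro allI impI)
    fix a b assume ab: "a \<le> b" "b < n"
    have "map (\<lambda>i. - y i) xs ! a \<le> map (\<lambda>i. - y i) xs ! b"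
      using sorted_nth_mono[OF s ab(1)] ab len by simp
    then show "(y \<circ> p) b \<le> (y \<circ> p) a" using ab len xsi by simp
  qed
  then show ?thesis using pn by blast
qed

lemma sum_split_at: "(m::nat) \<le> l \<Longrightarrow> (\<Sum>k<l. f k) = (\<Sum>k<m. f k) + (\<Sum>k\<in>{m..<l}. (f k :: real))"
  using sum.atLeastLessThan_concat[of 0 m l f] by (simp add: atLeast0LessThan[symmetric])

lemma hlp:
  fixes D :: "(nat \<Rightarrow> real) set" and n :: nat
  assumes Tclosed: "\<And>x i j s. x \<in> D \<Longrightarrow> i < n \<Longrightarrow> j < n \<Longrightarrow> i \<noteq> j \<Longrightarrow> 0 \<le> s \<Longrightarrow> s \<le> 1 \<Longrightarrow>
       x(i := (1-s) * x i + s * x j, j := s * x i + (1-s) * x j) \<in> D"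
    and congr: "\<And>x y. x \<in> D \<Longrightarrow> (\<forall>k<n. y k = x k) \<Longrightarrow> y \<in> D"
  shows "x \<in> D \<Longrightarrow> dec n x \<Longrightarrow> dec n y \<Longrightarrow> (\<forall>l\<le>n. psum y l \<le> psum x l) \<Longrightarrow> psum y n = psum x n \<Longrightarrow> y \<in> D"
proof (induction "card {k. k < n \<and> x k \<noteq> y k}" arbitrary: x rule: less_induct)
  case less
  note xD = less.prems(1) and dx = less.prems(2) and dy = less.prems(3) and ps = less.prems(4) and pn = less.prems(5)
  show ?case
  proof (cases "\<forall>k<n. x k = y k")
    case True
    then show ?thesis using congr[OF xD] by simp
  next
    case False
    define J where "J = {k. k < n \<and> y k < x k}"
    have finJ: "finite J" unfolding J_def by simp
    have Jne: "J \<noteq> {}"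
    proof
      assume "J = {}"
      then have le: "\<forall>k\<in>{..<n}. x k \<le> y k" unfolding J_def by force
      from False obtain k0 where k0: "k0 < n" "x k0 \<noteq> y k0" by auto
      with le have "x k0 < y k0" by force
      then have "(\<Sum>k<n. x k) < (\<Sum>k<n. y k)" using le k0 by (intro sum_strict_mono_ex1) auto
      then show False using pn unfolding psum_def by simp
    qed
    define j where "j = Max J"
    have jJ: "j \<in> J" unfolding j_def using finJ Jne by (rule Max_in)
    have jn: "j < n" and yj: "y j < x j" using jJ unfolding J_def by auto
    have above: "x i \<le> y i" if "j < i" "i < n" for i
    proof (rule ccontr)
      assume "\<not> x i \<le> y i" then have "i \<in> J" using that unfolding J_def by auto
      then have "i \<le> j" unfolding j_def using finJ by simp
      then show False using that by simp
    qed
    define K where "K = {k. j < k \<and> k < n \<and> x k < y k}"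
    have finK: "finite K" unfolding K_def by simp
    have Kne: "K \<noteq> {}"
    proof
      assume "K = {}"
      then have eq: "x i = y i" if "j < i" "i < n" for i using above[OF that] that unfolding K_def by force
      have "psum x (Suc j) = psum x j + x j" "psum y (Suc j) = psum y j + y j" unfolding psum_def by simp_all
      moreover have "psum y j \<le> psum x j" using ps jn by simp
      ultimately have a: "psum y (Suc j) < psum x (Suc j)" using yj by simp
      have "psum x n = psum x (Suc j) + (\<Sum>k\<in>{Suc j..<n}. x k)"
        unfolding psum_def by (rule sum_split_at) (use jn in simp)
      moreover have "psum y n = psum y (Suc j) + (\<Sum>k\<in>{Suc j..<n}. y k)"
        unfolding psum_def by (rule sum_split_at) (use jn in simp)
      moreover have "(\<Sum>k\<in>{Suc j..<n}. x k) = (\<Sum>k\<in>{Suc j..<n}. y k)"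
        by (rule sum.cong) (auto intro: eq)
      ultimately show False using a pn by simp
    qed
    define k where "k = Min K"
    have kK: "k \<in> K" unfolding k_def using finK Kne by (rule Min_in)
    have jk: "j < k" and kn: "k < n" and yk: "x k < y k" using kK unfolding K_def by auto
    have mid: "x i = y i" if "j < i" "i < k" for i
    proof -
      have "x i \<le> y i" using above that kn by simp
      moreover have "\<not> x i < y i"
      proof
        assume "x i < y i" then have "i \<in> K" unfolding K_def using that kn by simp
        then have "k \<le> i" unfolding k_def using finK by simp
        then show False using that by simp
      qed
      ultimately show ?thesis by simp
    qed
    have dxf: "x q \<le> x p" if "p \<le> q" "q < n" for p q using dx that unfolding dec_def by blast
    have dyf: "y q \<le> y p" if "p \<le> q" "q < n" for p q using dy that unfolding dec_def by blast
    define \<delta> where "\<delta> = min (x j - y j) (y k - x k)"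
    have \<delta>pos: "0 < \<delta>" unfolding \<delta>_def using yj yk by simp
    have \<delta>1: "\<delta> \<le> x j - y j" and \<delta>2: "\<delta> \<le> y k - x k" unfolding \<delta>_def by simp_all
    have yjk: "y k \<le> y j" using dyf[of j k] jk kn by simp
    have xjk: "x k < x j" using yjk yj yk by simp
    define s where "s = \<delta> / (x j - x k)"
    have s0: "0 \<le> s" unfolding s_def using \<delta>pos xjk by simp
    have s1: "s \<le> 1" unfolding s_def using \<delta>1 yjk yk xjk by (simp add: divide_le_eq)
    have sd: "s * (x j - x k) = \<delta>" unfolding s_def using xjk by simp
    have sj: "(1-s) * x j + s * x k = x j - \<delta>"
    proof -
      have "(1-s) * x j + s * x k = x j - s * (x j - x k)" by (simp add: algebra_simps)
      then show ?thesis using sd by simp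
    qed
    have sk: "s * x j + (1-s) * x k = x k + \<delta>"
    proof -
      have "s * x j + (1-s) * x k = x k + s * (x j - x k)" by (simp add: algebra_simps)
      then show ?thesis using sd by simp
    qed
    define x' where "x' = x(j := x j - \<delta>, k := x k + \<delta>)"
    have x'D: "x' \<in> D" unfolding x'_def using Tclosed[OF xD jn kn _ s0 s1] jk by (simp add: sj sk)
    have x'j: "x' j = x j - \<delta>" and x'k: "x' k = x k + \<delta>" and x'o: "\<And>i. i \<noteq> j \<Longrightarrow> i \<noteq> k \<Longrightarrow> x' i = x i"
      unfolding x'_def using jk by auto
    have dx': "dec n x'" unfolding dec_def
    proof (intro allI impI)
      fix p q assume pq: "p \<le> q" "q < n"
      show "x' q \<le> x' p"
      proof (cases "q = j")
        case True
        show ?thesis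
        proof (cases "p = j")
          case False
          then have "p < j" "p \<noteq> k" using pq True jk by auto
          then show ?thesis using True x'j x'o[of p] dxf[of p j] jn \<delta>pos by simp
        qed (use True in simp)
      next
        case qj: False
        show ?thesis
        proof (cases "q = k")
          case True
          show ?thesis
          proof (cases "p = k")
            case False
            then have pk: "p < k" using pq True by simp
            show ?thesis
            proof (cases "p = j")
              case True
              then show ?thesis using \<open>q = k\<close> x'j x'k \<delta>1 \<delta>2 yjk by simp
            next
              case pj: False
              show ?thesis
              proof (cases "p < j")
                case True
                then show ?thesis using \<open>q = k\<close> x'k x'o[OF pj False] dxf[of p j] jn \<delta>1 \<delta>2 yjk \<delta>pos by simp
              next
                case False
                then have "j < p" using pj by simp
                then show ?thesis using \<open>q = k\<close> x'k x'o[OF pj \<open>p \<noteq> k\<close>] mid[of p] pk dyf[of p k] kn \<delta>2 by simp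
              qed
            qed
          qed (use True in simp)
        next
          case qk: False
          have xq: "x' q = x q" using x'o[OF qj qk] .
          show ?thesis
          proof (cases "p = j")
            case True
            then have jq: "j < q" using pq qj by simp
            show ?thesis
            proof (cases "q < k")
              case True
              then show ?thesis using xq \<open>p = j\<close> x'j mid[OF jq True] dyf[of j q] pq \<delta>1 by simp
            next
              case False
              then have "k < q" using qk by simp
              then show ?thesis using xq \<open>p = j\<close> x'j dxf[of k q] pq \<delta>1 \<delta>2 yjk \<delta>pos by simp
            qed
          next
            case pj: False
            show ?thesis
            proof (cases "p = k")
              case True
              then show ?thesis using xq x'k dxf[of k q] pq \<delta>pos by simp
            next
              case False
              then show ?thesis using xq x'o[OF pj False] dxf[OF pq] by simp
            qed
          qed
        qed
      qed
    qed
    have x'sum: "x' i = x i + (if i = k then \<delta> else 0) - (if i = j then \<delta> else 0)" for i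
      unfolding x'_def using jk by auto
    have psx': "psum x' l = psum x l + (if k < l then \<delta> else 0) - (if j < l then \<delta> else 0)" for l
    proof -
      have "psum x' l = (\<Sum>i<l. x i + (if i = k then \<delta> else 0) - (if i = j then \<delta> else 0))"
        unfolding psum_def by (simp add: x'sum)
      also have "\<dots> = psum x l + (\<Sum>i<l. if i = k then \<delta> else 0) - (\<Sum>i<l. if i = j then \<delta> else 0)"
        unfolding psum_def by (simp add: sum.distrib sum_subtractf)
      also have "\<dots> = psum x l + (if k < l then \<delta> else 0) - (if j < l then \<delta> else 0)"
        by simp
      finally show ?thesis .
    qed
    have ps': "\<forall>l\<le>n. psum y l \<le> psum x' l"
    proof (intro allI impI)
      fix l assume ln: "l \<le> n"
      show "psum y l \<le> psum x' l"
      proof (cases "j < l \<and> l \<le> k")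
        case True
        have "psum x l = psum x (Suc j) + (\<Sum>i\<in>{Suc j..<l}. x i)"
          unfolding psum_def by (rule sum_split_at) (use True in simp)
        moreover have "psum y l = psum y (Suc j) + (\<Sum>i\<in>{Suc j..<l}. y i)"
          unfolding psum_def by (rule sum_split_at) (use True in simp)
        moreover have "(\<Sum>i\<in>{Suc j..<l}. x i) = (\<Sum>i\<in>{Suc j..<l}. y i)"
          by (rule sum.cong) (use True in \<open>auto intro: mid\<close>)
        moreover have "psum x (Suc j) = psum x j + x j" "psum y (Suc j) = psum y j + y j" unfolding psum_def by simp_all
        moreover have "psum y j \<le> psum x j" using ps jn by simp
        ultimately have "psum y l + \<delta> \<le> psum x l" using \<delta>1 by simp
        then show ?thesis using psx'[of l] True jk by simp
      next
        case False
        then show ?thesis using psx'[of l] ps ln jk by auto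
      qed
    qed
    have pn': "psum y n = psum x' n" using psx'[of n] pn jn kn by simp
    have sub: "{i. i < n \<and> x' i \<noteq> y i} \<subset> {i. i < n \<and> x i \<noteq> y i}"
    proof
      show "{i. i < n \<and> x' i \<noteq> y i} \<subseteq> {i. i < n \<and> x i \<noteq> y i}"
      proof
        fix i assume "i \<in> {i. i < n \<and> x' i \<noteq> y i}"
        then show "i \<in> {i. i < n \<and> x i \<noteq> y i}" using x'o[of i] yj yk by (cases "i = j \<or> i = k") auto
      qed
      show "{i. i < n \<and> x' i \<noteq> y i} \<noteq> {i. i < n \<and> x i \<noteq> y i}"
      proof (cases "\<delta> = x j - y j")
        case True
        then have "j \<notin> {i. i < n \<and> x' i \<noteq> y i}" using x'j by simp
        moreover have "j \<in> {i. i < n \<and> x i \<noteq> y i}" using jn yj by simp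
        ultimately show ?thesis by blast
      next
        case False
        then have "\<delta> = y k - x k" unfolding \<delta>_def by (simp add: min_def split: if_splits)
        then have "k \<notin> {i. i < n \<and> x' i \<noteq> y i}" using x'k by simp
        moreover have "k \<in> {i. i < n \<and> x i \<noteq> y i}" using kn yk by simp
        ultimately show ?thesis by blast
      qed
    qed
    have "card {i. i < n \<and> x' i \<noteq> y i} < card {i. i < n \<and> x i \<noteq> y i}"
      by (rule psubset_card_mono[OF _ sub]) simp
    then show ?thesis using less.hyps[OF _ x'D dx' dy ps' pn'] by simp
  qed
qed

lemma sum_ind_lt: "(m::nat) \<le> n \<Longrightarrow> (\<Sum>j<n. (if j < m then f j else 0)) = (\<Sum>j<m. (f j :: real))"
proof -
  assume mn: "m \<le> n"
  have "(\<Sum>j<n. (if j < m then f j else 0)) = (\<Sum>j\<in>{..<n} \<inter> {j. j < m}. f j)"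
    by (simp add: sum.inter_restrict)
  also have "{..<n} \<inter> {j. j < m} = {..<m}" using mn by auto
  finally show ?thesis by simp
qed

lemma schur_bound:
  assumes dl: "dec n lam" and c: "\<forall>j<n. 0 \<le> c j \<and> c j \<le> 1" and cs: "(\<Sum>j<n. c j) = real m" and mn: "m \<le> n"
  shows "(\<Sum>j<n. c j * lam j) \<le> psum lam m"
proof (cases "m = n")
  case True
  have "(\<Sum>j<n. 1 - c j) = 0" using cs True by (simp add: sum_subtractf)
  moreover have "\<forall>j\<in>{..<n}. 0 \<le> 1 - c j" using c by auto
  ultimately have "\<forall>j\<in>{..<n}. 1 - c j = 0" using sum_nonneg_eq_0_iff[of "{..<n}" "\<lambda>j. 1 - c j"] by simp
  then have "\<forall>j<n. c j = 1" by simp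
  then show ?thesis unfolding psum_def using True by simp
next
  case False
  then have mn': "m < n" using mn by simp
  define \<tau> where "\<tau> = lam m"
  have t: "(c j - (if j < m then 1 else 0)) * (lam j - \<tau>) \<le> 0" if "j < n" for j
  proof (cases "j < m")
    case True
    then have "lam m \<le> lam j" using dl mn' unfolding dec_def by simp
    then show ?thesis using True c that unfolding \<tau>_def by (simp add: mult_nonpos_nonneg)
  next
    case False
    then have "lam j \<le> lam m" using dl that unfolding dec_def by simp
    then show ?thesis using False c that unfolding \<tau>_def by (simp add: mult_nonneg_nonpos)
  qed
  have "(\<Sum>j<n. (c j - (if j < m then 1 else 0)) * (lam j - \<tau>)) \<le> 0"
    by (rule sum_nonpos) (use t in auto)
  moreover have "(\<Sum>j<n. (c j - (if j < m then 1 else 0)) * (lam j - \<tau>)) =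
     (\<Sum>j<n. c j * lam j) - (\<Sum>j<n. (if j < m then lam j else 0)) - \<tau> * (\<Sum>j<n. c j) + \<tau> * (\<Sum>j<n. (if j < m then 1 else 0))"
  proof -
    have e: "(c j - (if j < m then 1 else 0)) * (lam j - \<tau>) = c j * lam j - (if j < m then lam j else 0) - \<tau> * c j + \<tau> * (if j < m then 1 else 0)" for j
      by (cases "j < m") (simp_all add: algebra_simps)
    show ?thesis by (simp only: e sum.distrib sum_subtractf sum_distrib_left)
  qed
  moreover have "(\<Sum>j<n. (if j < m then lam j else 0)) = psum lam m" unfolding psum_def using sum_ind_lt[OF mn] .
  moreover have "(\<Sum>j<n. (if j < m then (1::real) else 0)) = real m" using sum_ind_lt[OF mn, of "\<lambda>_. 1"] by simp
  ultimately show ?thesis using cs by simp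
qed



lemma two_point_sum: fixes i j n :: nat assumes "i \<noteq> j" "i < n" "j < n" "\<And>p. p < n \<Longrightarrow> p \<noteq> i \<Longrightarrow> p \<noteq> j \<Longrightarrow> g p = 0"
  shows "(\<Sum>p<n. g p) = g i + (g j :: complex)"
proof -
  have "(\<Sum>p<n. g p) = (\<Sum>p\<in>{i,j}. g p)"
    by (rule sum.mono_neutral_right) (use assms in auto)
  also have "\<dots> = g i + g j" using assms by simp
  finally show ?thesis .
qed

definition rot :: "nat \<Rightarrow> nat \<Rightarrow> nat \<Rightarrow> real \<Rightarrow> complex mat" where
  "rot n i j \<theta> = mat n n (\<lambda>(p,q). if p = q then (if p = i \<or> p = j then complex_of_real (cos \<theta>) else 1)
     else if p = i \<and> q = j then complex_of_real (sin \<theta>) else if p = j \<and> q = i then - complex_of_real (sin \<theta>) else 0)"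

lemma rot_carrier: "rot n i j \<theta> \<in> carrier_mat n n" unfolding rot_def by simp

lemma rot_dims[simp]: "dim_row (rot n i j \<theta>) = n" "dim_col (rot n i j \<theta>) = n" unfolding rot_def by simp_all

context
  fixes n i j :: nat and \<theta> :: real
  assumes ij: "i \<noteq> j" "i < n" "j < n"
begin

lemma rot_col_i: "p < n \<Longrightarrow> rot n i j \<theta> $$ (p,i) = (if p = i then complex_of_real (cos \<theta>) else if p = j then - complex_of_real (sin \<theta>) else 0)"
  unfolding rot_def using ij by auto

lemma rot_col_j: "p < n \<Longrightarrow> rot n i j \<theta> $$ (p,j) = (if p = i then complex_of_real (sin \<theta>) else if p = j then complex_of_real (cos \<theta>) else 0)"
  unfolding rot_def using ij by auto

lemma rot_col_o: "p < n \<Longrightarrow> k < n \<Longrightarrow> k \<noteq> i \<Longrightarrow> k \<noteq> j \<Longrightarrow> rot n i j \<theta> $$ (p,k) = (if p = k then 1 else 0)"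
  unfolding rot_def using ij by auto

lemma cs1: "complex_of_real (cos \<theta>) * complex_of_real (cos \<theta>) + complex_of_real (sin \<theta>) * complex_of_real (sin \<theta>) = 1"
proof -
  have "complex_of_real (cos \<theta>) * complex_of_real (cos \<theta>) + complex_of_real (sin \<theta>) * complex_of_real (sin \<theta>)
     = complex_of_real ((sin \<theta>)\<^sup>2 + (cos \<theta>)\<^sup>2)" by (simp add: power2_eq_square)
  then show ?thesis by simp
qed

lemma rot_unitary: "unitary_mat n (rot n i j \<theta>)"
proof (rule unitary_from_left[OF rot_carrier])
  let ?R = "rot n i j \<theta>"
  let ?c = "complex_of_real (cos \<theta>)" and ?s = "complex_of_real (sin \<theta>)"
  show "mat_adjoint ?R * ?R = 1\<^sub>m n"
  proof (rule eq_matI)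
    fix k l assume "k < dim_row (1\<^sub>m n :: complex mat)" "l < dim_col (1\<^sub>m n :: complex mat)"
    then have k: "k < n" and l: "l < n" by auto
    have e: "(mat_adjoint ?R * ?R) $$ (k,l) = (\<Sum>p<n. cnj (?R $$ (p,k)) * ?R $$ (p,l))"
      using mult_entry[of "mat_adjoint ?R" n n ?R n k l] rot_carrier k l by simp
    have "(\<Sum>p<n. cnj (?R $$ (p,k)) * ?R $$ (p,l)) = (if k = l then 1 else 0)"
    proof (cases "k \<in> {i,j}")
      case kin: True
      show ?thesis
      proof (cases "l \<in> {i,j}")
        case True
        have "(\<Sum>p<n. cnj (?R $$ (p,k)) * ?R $$ (p,l)) = cnj (?R $$ (i,k)) * ?R $$ (i,l) + cnj (?R $$ (j,k)) * ?R $$ (j,l)"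
          by (rule two_point_sum) (use ij kin in \<open>auto simp: rot_col_i rot_col_j\<close>)
        also have "\<dots> = (if k = l then 1 else 0)"
          using kin True ij cs1 by (auto simp: rot_col_i rot_col_j mult.commute add.commute)
        finally show ?thesis .
      next
        case False
        have "(\<Sum>p<n. cnj (?R $$ (p,k)) * ?R $$ (p,l)) = (\<Sum>p<n. if p = l then cnj (?R $$ (l,k)) else 0)"
          by (rule sum.cong[OF refl]) (use False l in \<open>auto simp: rot_col_o\<close>)
        also have "\<dots> = 0" using kin False l ij by (auto simp: rot_col_i rot_col_j)
        finally show ?thesis using kin False by auto
      qed
    next
      case False
      have "(\<Sum>p<n. cnj (?R $$ (p,k)) * ?R $$ (p,l)) = (\<Sum>p<n. if p = k then ?R $$ (k,l) else 0)"
        by (rule sum.cong[OF refl]) (use False k in \<open>auto simp: rot_col_o\<close>)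
      also have "\<dots> = ?R $$ (k,l)" using k by simp
      also have "\<dots> = (if k = l then 1 else 0)" using False k l ij unfolding rot_def by auto
      finally show ?thesis .
    qed
    then show "(mat_adjoint ?R * ?R) $$ (k,l) = (1\<^sub>m n :: complex mat) $$ (k,l)" using e k l by simp
  qed (use rot_carrier in auto)
qed

lemma rot_diag: assumes A: "A \<in> carrier_mat n n" and k: "k < n"
  shows "(mat_adjoint (rot n i j \<theta>) * A * rot n i j \<theta>) $$ (k,k) =
    (if k = i then complex_of_real (cos \<theta>) * complex_of_real (cos \<theta>) * A $$ (i,i)
         + complex_of_real (sin \<theta>) * complex_of_real (sin \<theta>) * A $$ (j,j)
         - complex_of_real (cos \<theta>) * complex_of_real (sin \<theta>) * (A $$ (i,j) + A $$ (j,i))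
     else if k = j then complex_of_real (sin \<theta>) * complex_of_real (sin \<theta>) * A $$ (i,i)
         + complex_of_real (cos \<theta>) * complex_of_real (cos \<theta>) * A $$ (j,j)
         + complex_of_real (cos \<theta>) * complex_of_real (sin \<theta>) * (A $$ (i,j) + A $$ (j,i))
     else A $$ (k,k))"
proof -
  let ?R = "rot n i j \<theta>"
  let ?c = "complex_of_real (cos \<theta>)" and ?s = "complex_of_real (sin \<theta>)"
  have T: "(mat_adjoint ?R * A * ?R) $$ (k,k) = (\<Sum>p<n. \<Sum>q<n. cnj (?R $$ (p,k)) * A $$ (p,q) * ?R $$ (q,k))"
    by (rule triple_entry[OF rot_carrier A rot_carrier k k])
  show ?thesis
  proof (cases "k \<in> {i,j}")
    case True
    have inner: "(\<Sum>q<n. cnj (?R $$ (p,k)) * A $$ (p,q) * ?R $$ (q,k)) =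
       cnj (?R $$ (p,k)) * A $$ (p,i) * ?R $$ (i,k) + cnj (?R $$ (p,k)) * A $$ (p,j) * ?R $$ (j,k)" for p
      by (rule two_point_sum) (use ij True in \<open>auto simp: rot_col_i rot_col_j\<close>)
    have "(\<Sum>p<n. \<Sum>q<n. cnj (?R $$ (p,k)) * A $$ (p,q) * ?R $$ (q,k)) =
      (\<Sum>p<n. cnj (?R $$ (p,k)) * A $$ (p,i) * ?R $$ (i,k) + cnj (?R $$ (p,k)) * A $$ (p,j) * ?R $$ (j,k))"
      by (simp only: inner)
    also have "\<dots> = (cnj (?R $$ (i,k)) * A $$ (i,i) * ?R $$ (i,k) + cnj (?R $$ (i,k)) * A $$ (i,j) * ?R $$ (j,k))
       + (cnj (?R $$ (j,k)) * A $$ (j,i) * ?R $$ (i,k) + cnj (?R $$ (j,k)) * A $$ (j,j) * ?R $$ (j,k))"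
      by (rule two_point_sum) (use ij True in \<open>auto simp: rot_col_i rot_col_j\<close>)
    finally have S: "(\<Sum>p<n. \<Sum>q<n. cnj (?R $$ (p,k)) * A $$ (p,q) * ?R $$ (q,k)) = \<dots>" .
    show ?thesis
    proof (cases "k = i")
      case True
      then show ?thesis using T S ij by (simp add: rot_col_i algebra_simps)
    next
      case False
      then have "k = j" using \<open>k \<in> {i,j}\<close> by simp
      then show ?thesis using T S ij by (simp add: rot_col_j algebra_simps)
    qed
  next
    case False
    have inner: "(\<Sum>q<n. cnj (?R $$ (p,k)) * A $$ (p,q) * ?R $$ (q,k)) = cnj (?R $$ (p,k)) * A $$ (p,k)" for p
    proof -
      have "(\<Sum>q<n. cnj (?R $$ (p,k)) * A $$ (p,q) * ?R $$ (q,k)) = (\<Sum>q<n. if q = k then cnj (?R $$ (p,k)) * A $$ (p,k) else 0)"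
        by (rule sum.cong[OF refl]) (use False k in \<open>auto simp: rot_col_o\<close>)
      then show ?thesis using k by simp
    qed
    have "(\<Sum>p<n. \<Sum>q<n. cnj (?R $$ (p,k)) * A $$ (p,q) * ?R $$ (q,k)) =
        (\<Sum>p<n. if p = k then A $$ (k,k) else 0)"
      unfolding inner by (rule sum.cong[OF refl]) (use False k in \<open>auto simp: rot_col_o\<close>)
    also have "\<dots> = A $$ (k,k)" using k by simp
    finally show ?thesis using T False by simp
  qed
qed

end

lemma T_step: assumes A: "A \<in> carrier_mat n n" and herm: "mat_adjoint A = A"
  and ij: "i \<noteq> j" "i < n" "j < n" and t: "0 \<le> t" "t \<le> 1"
  shows "\<exists>R. unitary_mat n R \<and> (\<forall>k<n. (mat_adjoint R * A * R) $$ (k,k) =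
     (if k = i then complex_of_real ((1-t) * Re (A $$ (i,i)) + t * Re (A $$ (j,j)))
      else if k = j then complex_of_real (t * Re (A $$ (i,i)) + (1-t) * Re (A $$ (j,j)))
      else A $$ (k,k)))"
proof -
  have hE: "cnj (A $$ (q,p)) = A $$ (p,q)" if "p < n" "q < n" for p q
  proof -
    have "mat_adjoint A $$ (p,q) = cnj (A $$ (q,p))" using A that by simp
    then show ?thesis using herm by simp
  qed
  define a where "a = Re (A $$ (i,i))"
  define b where "b = Re (A $$ (j,j))"
  define r where "r = Re (A $$ (i,j))"
  have Aii: "A $$ (i,i) = complex_of_real a"
    using hE[of i i] ij unfolding a_def by (simp add: complex_eq_iff)
  have Ajj: "A $$ (j,j) = complex_of_real b"
    using hE[of j j] ij unfolding b_def by (simp add: complex_eq_iff)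
  have Aij: "A $$ (i,j) + A $$ (j,i) = complex_of_real (2 * r)"
    using hE[of j i] ij complex_add_cnj[of "A $$ (i,j)"] unfolding r_def by simp
  define f where "f = (\<lambda>\<theta>. cos \<theta> * cos \<theta> * a + sin \<theta> * sin \<theta> * b - cos \<theta> * sin \<theta> * (2 * r))"
  define v where "v = (1-t) * a + t * b"
  have cont: "continuous_on {0..pi/2} f" unfolding f_def by (intro continuous_intros)
  have f0: "f 0 = a" and f1: "f (pi/2) = b" unfolding f_def by simp_all
  have "\<exists>\<theta>\<ge>0. \<theta> \<le> pi/2 \<and> f \<theta> = v"
  proof (cases "a \<le> b")
    case True
    have m1: "a*t \<le> b*t" using mult_right_mono[OF True t(1)] .
    have m2: "a*(1-t) \<le> b*(1-t)" using mult_right_mono[OF True] t by simp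
    have "f 0 \<le> v" "v \<le> f (pi/2)" unfolding f0 f1 v_def using m1 m2
      by (simp_all add: algebra_simps)
    then show ?thesis using IVT'[of f 0 v "pi/2"] cont by simp
  next
    case False
    have ba: "b \<le> a" using False by simp
    have m1: "b*t \<le> a*t" using mult_right_mono[OF ba t(1)] .
    have m2: "b*(1-t) \<le> a*(1-t)" using mult_right_mono[OF ba] t by simp
    have "f (pi/2) \<le> v" "v \<le> f 0" unfolding f0 f1 v_def using m1 m2
      by (simp_all add: algebra_simps)
    moreover have "\<forall>x. 0 \<le> x \<and> x \<le> pi/2 \<longrightarrow> isCont f x" unfolding f_def by (auto intro!: continuous_intros)
    ultimately show ?thesis using IVT2[of f "pi/2" v 0] by simp
  qed
  then obtain \<theta> where th: "f \<theta> = v" by blast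
  let ?R = "rot n i j \<theta>"
  have "\<forall>k<n. (mat_adjoint ?R * A * ?R) $$ (k,k) =
     (if k = i then complex_of_real ((1-t) * Re (A $$ (i,i)) + t * Re (A $$ (j,j)))
      else if k = j then complex_of_real (t * Re (A $$ (i,i)) + (1-t) * Re (A $$ (j,j)))
      else A $$ (k,k))"
  proof (intro allI impI)
    fix k assume k: "k < n"
    have cs: "cos \<theta> * cos \<theta> + sin \<theta> * sin \<theta> = 1" using sin_cos_squared_add[of \<theta>] by (simp add: power2_eq_square)
    have ei: "complex_of_real (cos \<theta>) * complex_of_real (cos \<theta>) * A $$ (i,i)
         + complex_of_real (sin \<theta>) * complex_of_real (sin \<theta>) * A $$ (j,j)
         - complex_of_real (cos \<theta>) * complex_of_real (sin \<theta>) * (A $$ (i,j) + A $$ (j,i)) = complex_of_real (f \<theta>)"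
      unfolding Aii Ajj Aij f_def by (simp only: of_real_mult[symmetric] of_real_add[symmetric] of_real_diff[symmetric])
    have fr: "sin \<theta> * sin \<theta> * a + cos \<theta> * cos \<theta> * b + cos \<theta> * sin \<theta> * (2 * r) = a + b - f \<theta>"
    proof -
      have 1: "a + b - f \<theta> = a * (1 - cos \<theta> * cos \<theta>) + b * (1 - sin \<theta> * sin \<theta>) + cos \<theta> * sin \<theta> * (2 * r)"
        unfolding f_def by (simp add: algebra_simps)
      have 2: "1 - cos \<theta> * cos \<theta> = sin \<theta> * sin \<theta>" "1 - sin \<theta> * sin \<theta> = cos \<theta> * cos \<theta>" using cs by linarith+
      show ?thesis unfolding 1 2 by (simp add: algebra_simps)
    qed
    have ej: "complex_of_real (sin \<theta>) * complex_of_real (sin \<theta>) * A $$ (i,i)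
         + complex_of_real (cos \<theta>) * complex_of_real (cos \<theta>) * A $$ (j,j)
         + complex_of_real (cos \<theta>) * complex_of_real (sin \<theta>) * (A $$ (i,j) + A $$ (j,i)) = complex_of_real (a + b - f \<theta>)"
      unfolding Aii Ajj Aij fr[symmetric] by (simp only: of_real_mult[symmetric] of_real_add[symmetric] of_real_diff[symmetric])
    show "(mat_adjoint ?R * A * ?R) $$ (k,k) =
     (if k = i then complex_of_real ((1-t) * Re (A $$ (i,i)) + t * Re (A $$ (j,j)))
      else if k = j then complex_of_real (t * Re (A $$ (i,i)) + (1-t) * Re (A $$ (j,j)))
      else A $$ (k,k))"
      unfolding rot_diag[OF ij A k] ei ej th using ij unfolding v_def a_def[symmetric] b_def[symmetric]
      by (auto simp: algebra_simps)
  qed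
  then show ?thesis using rot_unitary[OF ij] by blast
qed



lemma cscalar_self: assumes "w \<in> carrier_vec n" "w \<bullet>c w \<noteq> 0"
  shows "Im (w \<bullet>c w) = 0 \<and> Re (w \<bullet>c w) > 0"
proof -
  have "w \<bullet>c w \<ge> 0" by (rule conjugate_square_ge_0_vec)
  then have "w \<bullet>c w > 0" using assms(2) by (simp add: order_le_less)
  then show ?thesis by (simp add: less_complex_def)
qed

lemma unitary_completion: fixes u :: "complex vec"
  assumes u: "u \<in> carrier_vec n" and u0: "u \<noteq> 0\<^sub>v n"
  shows "\<exists>W c. unitary_mat n W \<and> c \<noteq> 0 \<and> (\<forall>p<n. W $$ (p,0) = c * u $ p)"
proof -
  interpret cof_vec_space n "TYPE(complex)" .
  define b where "b = basis_completion u"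
  from basis_completion[OF u u0, folded b_def]
  have dist_b: "distinct b" and indep: "\<not> lin_dep (set b)" and bc: "set b \<subseteq> carrier_vec n"
    and hdb: "hd b = u" and len_b: "length b = n" by auto
  have n0: "n \<noteq> 0" using u u0 by (cases "n = 0") auto
  from hdb len_b n0 obtain vs where bv: "b = u # vs" by (cases b) auto
  define ws where "ws = gram_schmidt n b"
  from gram_schmidt_result[OF bc dist_b indep refl, folded ws_def]
  have orth: "corthogonal ws" and wsc: "set ws \<subseteq> carrier_vec n" and len: "length ws = n" using len_b by auto
  have hdws: "hd ws = u" unfolding ws_def bv by (rule gram_schmidt_hd[OF u])
  have ws0: "ws ! 0 = u" using hdws n0 len by (cases ws) auto
  have wsq: "ws ! q \<in> carrier_vec n" if "q < n" for q using wsc len that by auto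
  have nz: "ws ! q \<bullet>c ws ! q \<noteq> 0" if "q < n" for q using corthogonalD[OF orth, of q q] len that by simp
  have oz: "ws ! l \<bullet>c ws ! k = 0" if "k < n" "l < n" "k \<noteq> l" for k l using corthogonalD[OF orth, of l k] len that by simp
  define N where "N = (\<lambda>q. sqrt (Re (ws ! q \<bullet>c ws ! q)))"
  have Npos: "N q > 0" if "q < n" for q unfolding N_def using cscalar_self[OF wsq[OF that] nz[OF that]] by simp
  have Nsq: "complex_of_real (N q) * complex_of_real (N q) = ws ! q \<bullet>c ws ! q" if "q < n" for q
  proof -
    have c: "Im (ws ! q \<bullet>c ws ! q) = 0 \<and> Re (ws ! q \<bullet>c ws ! q) > 0" using cscalar_self[OF wsq[OF that] nz[OF that]] .
    have "N q * N q = Re (ws ! q \<bullet>c ws ! q)" unfolding N_def using c by simp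
    then show ?thesis using c by (simp add: complex_eq_iff flip: of_real_mult)
  qed
  define W where "W = mat n n (\<lambda>(p,q). ws ! q $ p / complex_of_real (N q))"
  have W: "W \<in> carrier_mat n n" unfolding W_def by simp
  have sp: "ws ! l \<bullet>c ws ! k = (\<Sum>p<n. ws ! l $ p * cnj (ws ! k $ p))" if "k < n" "l < n" for k l
    using wsq[OF that(1)] wsq[OF that(2)] by (simp add: scalar_prod_def atLeast0LessThan)
  have "mat_adjoint W * W = 1\<^sub>m n"
  proof (rule eq_matI)
    fix k l assume "k < dim_row (1\<^sub>m n :: complex mat)" "l < dim_col (1\<^sub>m n :: complex mat)"
    then have k: "k < n" and l: "l < n" by auto
    have "(mat_adjoint W * W) $$ (k,l) = (\<Sum>p<n. mat_adjoint W $$ (k,p) * W $$ (p,l))"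
      by (rule mult_entry[OF _ W k l]) (use W in simp)
    also have "\<dots> = (\<Sum>p<n. ws ! l $ p * cnj (ws ! k $ p)) / (complex_of_real (N k) * complex_of_real (N l))"
      unfolding sum_divide_distrib
      by (rule sum.cong[OF refl]) (use W k l in \<open>simp add: W_def mult.commute\<close>)
    also have "\<dots> = (ws ! l \<bullet>c ws ! k) / (complex_of_real (N k) * complex_of_real (N l))" using sp k l by simp
    also have "\<dots> = (1\<^sub>m n :: complex mat) $$ (k,l)"
    proof (cases "k = l")
      case True
      then show ?thesis using Nsq[OF k] nz[OF k] k by simp
    next
      case False
      then show ?thesis using oz[OF k l False] k l by simp
    qed
    finally show "(mat_adjoint W * W) $$ (k,l) = (1\<^sub>m n :: complex mat) $$ (k,l)" .
  qed (use W in auto)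
  then have uW: "unitary_mat n W" by (rule unitary_from_left[OF W])
  have "\<forall>p<n. W $$ (p,0) = (1 / complex_of_real (N 0)) * u $ p"
    using n0 ws0 unfolding W_def by simp
  moreover have "1 / complex_of_real (N 0) \<noteq> 0" using Npos[of 0] n0 by simp
  ultimately show ?thesis using uW by blast
qed



lemma eigvec_exists: fixes A :: "complex mat"
  assumes A: "A \<in> carrier_mat n n" and n: "n > 0"
  shows "\<exists>e v. v \<in> carrier_vec n \<and> v \<noteq> 0\<^sub>v n \<and> A *\<^sub>v v = e \<cdot>\<^sub>v v"
proof -
  have "degree (char_poly A) = n" using degree_monic_char_poly[OF A] by simp
  then have "\<not> constant (poly (char_poly A))" using n by (subst constant_degree) simp
  then obtain e where "poly (char_poly A) e = 0" using fundamental_theorem_of_algebra by blast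
  then have "eigenvalue A e" using eigenvalue_root_char_poly[OF A] by simp
  then obtain v where "eigenvector A v e" unfolding eigenvalue_def by blast
  then show ?thesis unfolding eigenvector_def using A by auto
qed

lemma herm_entry: "B \<in> carrier_mat n n \<Longrightarrow> mat_adjoint B = B \<Longrightarrow> p < n \<Longrightarrow> q < n \<Longrightarrow> B $$ (q,p) = cnj (B $$ (p,q))"
proof -
  assume B: "B \<in> carrier_mat n n" and h: "mat_adjoint B = B" and pq: "p < n" "q < n"
  have "mat_adjoint B $$ (q,p) = cnj (B $$ (p,q))" using B pq by simp
  then show ?thesis using h by simp
qed

lemma conj_assoc: fixes W V A :: "complex mat" assumes W: "W \<in> carrier_mat n n" and V: "V \<in> carrier_mat n n" and A: "A \<in> carrier_mat n n"
  shows "mat_adjoint (W * V) * A * (W * V) = mat_adjoint V * (mat_adjoint W * A * W) * V"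
proof -
  have aW: "mat_adjoint W \<in> carrier_mat n n" using W by simp
  have aV: "mat_adjoint V \<in> carrier_mat n n" using V by simp
  have "mat_adjoint (W * V) * A * (W * V) = mat_adjoint V * mat_adjoint W * A * (W * V)"
    by (simp add: adj_mult[OF W V])
  also have "\<dots> = mat_adjoint V * (mat_adjoint W * A) * (W * V)"
    using assoc_mult_mat[OF aV aW A] by simp
  also have "\<dots> = mat_adjoint V * ((mat_adjoint W * A) * (W * V))"
    using assoc_mult_mat[OF aV mult_carrier_mat[OF aW A] mult_carrier_mat[OF W V]] by simp
  also have "(mat_adjoint W * A) * (W * V) = (mat_adjoint W * A * W) * V"
    using assoc_mult_mat[OF mult_carrier_mat[OF aW A] W V] by simp
  also have "mat_adjoint V * (mat_adjoint W * A * W * V) = mat_adjoint V * (mat_adjoint W * A * W) * V"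
    using assoc_mult_mat[OF aV mult_carrier_mat[OF mult_carrier_mat[OF aW A] W] V] by simp
  finally show ?thesis .
qed

lemma first_col: fixes A W :: "complex mat"
  assumes A: "A \<in> carrier_mat n n" and W: "unitary_mat n W" and Wc: "\<forall>p<n. W $$ (p,0) = c * v $ p"
    and v: "v \<in> carrier_vec n" and ev: "A *\<^sub>v v = e \<cdot>\<^sub>v v" and n: "0 < n" and p: "p < n"
  shows "(mat_adjoint W * A * W) $$ (p,0) = (if p = 0 then e else 0)"
proof -
  have Wm: "W \<in> carrier_mat n n" using W unitary_carrier by auto
  have WW: "mat_adjoint W * W = 1\<^sub>m n" using W unfolding unitary_mat_def by simp
  have Av: "(\<Sum>l<n. A $$ (k,l) * W $$ (l,0)) = e * W $$ (k,0)" if k: "k < n" for k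
  proof -
    have "(A *\<^sub>v v) $ k = (\<Sum>l<n. A $$ (k,l) * v $ l)"
      using A v k by (simp add: scalar_prod_def atLeast0LessThan)
    then have "(\<Sum>l<n. A $$ (k,l) * v $ l) = e * v $ k" using ev k v by simp
    then have "c * (\<Sum>l<n. A $$ (k,l) * v $ l) = e * (c * v $ k)" by (simp add: algebra_simps)
    then show ?thesis using Wc k by (simp add: sum_distrib_left algebra_simps)
  qed
  have "(mat_adjoint W * A * W) $$ (p,0) = (\<Sum>k<n. \<Sum>l<n. cnj (W $$ (k,p)) * A $$ (k,l) * W $$ (l,0))"
    by (rule triple_entry[OF Wm A Wm p n])
  also have "\<dots> = (\<Sum>k<n. e * (cnj (W $$ (k,p)) * W $$ (k,0)))"
  proof (rule sum.cong[OF refl])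
    fix k assume "k \<in> {..<n}"
    then have k: "k < n" by simp
    have "(\<Sum>l<n. cnj (W $$ (k,p)) * A $$ (k,l) * W $$ (l,0)) = cnj (W $$ (k,p)) * (\<Sum>l<n. A $$ (k,l) * W $$ (l,0))"
      by (simp add: sum_distrib_left algebra_simps)
    also have "\<dots> = e * (cnj (W $$ (k,p)) * W $$ (k,0))" using Av[OF k] by simp
    finally show "(\<Sum>l<n. cnj (W $$ (k,p)) * A $$ (k,l) * W $$ (l,0)) = e * (cnj (W $$ (k,p)) * W $$ (k,0))" .
  qed
  also have "\<dots> = e * (mat_adjoint W * W) $$ (p,0)"
    using mult_entry[of "mat_adjoint W" n n W n p 0] Wm p n by (simp add: sum_distrib_left)
  also have "\<dots> = (if p = 0 then e else 0)" using WW p n by simp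
  finally show ?thesis .
qed

lemma block_ext: fixes B VC :: "complex mat"
  assumes B: "B \<in> carrier_mat (Suc m) (Suc m)" and h: "mat_adjoint B = B"
    and col: "\<forall>p. 0 < p \<and> p < Suc m \<longrightarrow> B $$ (p,0) = 0"
    and VC: "unitary_mat m VC"
    and D: "\<forall>k<m. \<forall>l<m. k \<noteq> l \<longrightarrow> (mat_adjoint VC * mat m m (\<lambda>(p,q). B $$ (Suc p, Suc q)) * VC) $$ (k,l) = 0"
  shows "\<exists>V. unitary_mat (Suc m) V \<and> (\<forall>k<Suc m. \<forall>l<Suc m. k \<noteq> l \<longrightarrow> (mat_adjoint V * B * V) $$ (k,l) = 0)"
proof -
  let ?n = "Suc m"
  define C where "C = mat m m (\<lambda>(p,q). B $$ (Suc p, Suc q))"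
  have Cc: "C \<in> carrier_mat m m" unfolding C_def by simp
  have VCc: "VC \<in> carrier_mat m m" using VC unitary_carrier by auto
  have VCVC: "mat_adjoint VC * VC = 1\<^sub>m m" using VC unfolding unitary_mat_def by simp
  have row: "B $$ (0,q) = 0" if "0 < q" "q < ?n" for q
    using herm_entry[OF B h, of q 0] col that by simp
  define V where "V = mat ?n ?n (\<lambda>(p,q). if p = 0 then (if q = 0 then 1 else 0) else if q = 0 then 0 else VC $$ (p - 1, q - 1))"
  have Vc: "V \<in> carrier_mat ?n ?n" unfolding V_def by simp
  have V0: "V $$ (0,q) = (if q = 0 then 1 else 0)" if "q < ?n" for q unfolding V_def using that by simp
  have Vq0: "V $$ (Suc p, 0) = 0" if "p < m" for p unfolding V_def using that by simp
  have VS: "V $$ (Suc p, Suc q) = VC $$ (p,q)" if "p < m" "q < m" for p q unfolding V_def using that by simp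
  have "mat_adjoint V * V = 1\<^sub>m ?n"
  proof (rule eq_matI)
    fix k l assume "k < dim_row (1\<^sub>m ?n :: complex mat)" "l < dim_col (1\<^sub>m ?n :: complex mat)"
    then have k: "k < ?n" and l: "l < ?n" by auto
    have "(mat_adjoint V * V) $$ (k,l) = (\<Sum>p<?n. mat_adjoint V $$ (k,p) * V $$ (p,l))"
      by (rule mult_entry[OF _ Vc k l]) (use Vc in simp)
    also have "\<dots> = (\<Sum>p<?n. cnj (V $$ (p,k)) * V $$ (p,l))"
      by (rule sum.cong[OF refl]) (use Vc k in simp)
    also have "\<dots> = cnj (V $$ (0,k)) * V $$ (0,l) + (\<Sum>p<m. cnj (V $$ (Suc p,k)) * V $$ (Suc p,l))"
      by (rule sum.lessThan_Suc_shift)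
    also have "\<dots> = (1\<^sub>m ?n :: complex mat) $$ (k,l)"
    proof (cases "k = 0 \<or> l = 0")
      case True
      have "(\<Sum>p<m. cnj (V $$ (Suc p,k)) * V $$ (Suc p,l)) = 0"
        by (rule sum.neutral) (use True Vq0 in auto)
      then show ?thesis using True V0 k l by auto
    next
      case False
      then obtain k' l' where kl: "k = Suc k'" "l = Suc l'" by (meson not0_implies_Suc)
      have k': "k' < m" and l': "l' < m" using k l kl by auto
      have "(\<Sum>p<m. cnj (V $$ (Suc p,k)) * V $$ (Suc p,l)) = (\<Sum>p<m. mat_adjoint VC $$ (k',p) * VC $$ (p,l'))"
        by (rule sum.cong[OF refl]) (use kl k' l' VCc VS in simp)
      also have "\<dots> = (mat_adjoint VC * VC) $$ (k',l')"
        by (rule mult_entry[symmetric, OF _ VCc k' l']) (use VCc in simp)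
      also have "\<dots> = (if k' = l' then 1 else 0)" using VCVC k' l' by simp
      finally show ?thesis using kl V0 k l k' l' by auto
    qed
    finally show "(mat_adjoint V * V) $$ (k,l) = (1\<^sub>m ?n :: complex mat) $$ (k,l)" .
  qed (use Vc in auto)
  then have uV: "unitary_mat ?n V" by (rule unitary_from_left[OF Vc])
  have off: "(mat_adjoint V * B * V) $$ (k,l) = 0" if k: "k < ?n" and l: "l < ?n" and kl: "k \<noteq> l" for k l
  proof -
    have T: "(mat_adjoint V * B * V) $$ (k,l) = (\<Sum>p<?n. \<Sum>q<?n. cnj (V $$ (p,k)) * B $$ (p,q) * V $$ (q,l))"
      by (rule triple_entry[OF Vc B Vc k l])
    show ?thesis
    proof (cases "k = 0")
      case True
      then obtain l' where l': "l = Suc l'" "l' < m" using kl l by (metis less_Suc_eq_0_disj)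
      have "(\<Sum>p<?n. \<Sum>q<?n. cnj (V $$ (p,k)) * B $$ (p,q) * V $$ (q,l)) =
            (\<Sum>q<?n. cnj (V $$ (0,k)) * B $$ (0,q) * V $$ (q,l)) + (\<Sum>p<m. \<Sum>q<?n. cnj (V $$ (Suc p,k)) * B $$ (Suc p,q) * V $$ (q,l))"
        by (rule sum.lessThan_Suc_shift)
      also have "(\<Sum>p<m. \<Sum>q<?n. cnj (V $$ (Suc p,k)) * B $$ (Suc p,q) * V $$ (q,l)) = 0"
        by (rule sum.neutral) (use True Vq0 in simp)
      also have "(\<Sum>q<?n. cnj (V $$ (0,k)) * B $$ (0,q) * V $$ (q,l)) =
          cnj (V $$ (0,k)) * B $$ (0,0) * V $$ (0,l) + (\<Sum>q<m. cnj (V $$ (0,k)) * B $$ (0,Suc q) * V $$ (Suc q,l))"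
        by (rule sum.lessThan_Suc_shift)
      also have "(\<Sum>q<m. cnj (V $$ (0,k)) * B $$ (0,Suc q) * V $$ (Suc q,l)) = 0"
        by (rule sum.neutral) (use row in simp)
      finally show ?thesis using T V0 l' by simp
    next
      case False
      then obtain k' where k': "k = Suc k'" "k' < m" using k by (metis less_Suc_eq_0_disj)
      show ?thesis
      proof (cases "l = 0")
        case True
        have "(\<Sum>p<?n. \<Sum>q<?n. cnj (V $$ (p,k)) * B $$ (p,q) * V $$ (q,l)) = (\<Sum>p<?n. cnj (V $$ (p,k)) * B $$ (p,0))"
        proof (rule sum.cong[OF refl])
          fix p assume "p \<in> {..<?n}"
          have "(\<Sum>q<?n. cnj (V $$ (p,k)) * B $$ (p,q) * V $$ (q,l)) =
              cnj (V $$ (p,k)) * B $$ (p,0) * V $$ (0,l) + (\<Sum>q<m. cnj (V $$ (p,k)) * B $$ (p,Suc q) * V $$ (Suc q,l))"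
            by (rule sum.lessThan_Suc_shift)
          also have "(\<Sum>q<m. cnj (V $$ (p,k)) * B $$ (p,Suc q) * V $$ (Suc q,l)) = 0"
            by (rule sum.neutral) (use True Vq0 in simp)
          finally show "(\<Sum>q<?n. cnj (V $$ (p,k)) * B $$ (p,q) * V $$ (q,l)) = cnj (V $$ (p,k)) * B $$ (p,0)"
            using V0 True by simp
        qed
        also have "\<dots> = cnj (V $$ (0,k)) * B $$ (0,0) + (\<Sum>p<m. cnj (V $$ (Suc p,k)) * B $$ (Suc p,0))"
          by (rule sum.lessThan_Suc_shift)
        also have "(\<Sum>p<m. cnj (V $$ (Suc p,k)) * B $$ (Suc p,0)) = 0"
          by (rule sum.neutral) (use col in simp)
        finally show ?thesis using T V0 k' k by simp
      next
        case False
        then obtain l' where l': "l = Suc l'" "l' < m" using l by (metis less_Suc_eq_0_disj)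
        have inner: "(\<Sum>q<?n. cnj (V $$ (Suc p,k)) * B $$ (Suc p,q) * V $$ (q,l)) =
              (\<Sum>q<m. cnj (VC $$ (p,k')) * C $$ (p,q) * VC $$ (q,l'))" if p: "p < m" for p
        proof -
          have "(\<Sum>q<?n. cnj (V $$ (Suc p,k)) * B $$ (Suc p,q) * V $$ (q,l)) =
              cnj (V $$ (Suc p,k)) * B $$ (Suc p,0) * V $$ (0,l) + (\<Sum>q<m. cnj (V $$ (Suc p,k)) * B $$ (Suc p,Suc q) * V $$ (Suc q,l))"
            by (rule sum.lessThan_Suc_shift)
          also have "(\<Sum>q<m. cnj (V $$ (Suc p,k)) * B $$ (Suc p,Suc q) * V $$ (Suc q,l)) =
               (\<Sum>q<m. cnj (VC $$ (p,k')) * C $$ (p,q) * VC $$ (q,l'))"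
            by (rule sum.cong[OF refl]) (use p k' l' VS in \<open>simp add: C_def\<close>)
          finally show ?thesis using V0 l' by simp
        qed
        have "(\<Sum>p<?n. \<Sum>q<?n. cnj (V $$ (p,k)) * B $$ (p,q) * V $$ (q,l)) =
            (\<Sum>q<?n. cnj (V $$ (0,k)) * B $$ (0,q) * V $$ (q,l)) + (\<Sum>p<m. \<Sum>q<?n. cnj (V $$ (Suc p,k)) * B $$ (Suc p,q) * V $$ (q,l))"
          by (rule sum.lessThan_Suc_shift)
        also have "(\<Sum>q<?n. cnj (V $$ (0,k)) * B $$ (0,q) * V $$ (q,l)) = 0"
          by (rule sum.neutral) (use V0 k' in simp)
        also have "(\<Sum>p<m. \<Sum>q<?n. cnj (V $$ (Suc p,k)) * B $$ (Suc p,q) * V $$ (q,l)) =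
            (\<Sum>p<m. \<Sum>q<m. cnj (VC $$ (p,k')) * C $$ (p,q) * VC $$ (q,l'))"
          by (rule sum.cong[OF refl]) (use inner in simp)
        also have "\<dots> = (mat_adjoint VC * C * VC) $$ (k',l')"
          by (rule triple_entry[symmetric, OF VCc Cc VCc k'(2) l'(2)])
        also have "\<dots> = 0" using D k' l' kl unfolding C_def by simp
        finally show ?thesis using T by simp
      qed
    qed
  qed
  show ?thesis using uV off by blast
qed

lemma adj_triple_herm: fixes W A :: "complex mat"
  assumes W: "W \<in> carrier_mat n n" and A: "A \<in> carrier_mat n n" and h: "mat_adjoint A = A"
  shows "mat_adjoint (mat_adjoint W * A * W) = mat_adjoint W * A * W"
proof -
  have aW: "mat_adjoint W \<in> carrier_mat n n" using W by simp
  have "mat_adjoint (mat_adjoint W * A * W) = mat_adjoint W * mat_adjoint (mat_adjoint W * A)"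
    using adj_mult[OF mult_carrier_mat[OF aW A] W] by simp
  also have "mat_adjoint (mat_adjoint W * A) = mat_adjoint A * W"
    using adj_mult[OF aW A] by simp
  also have "mat_adjoint W * (mat_adjoint A * W) = mat_adjoint W * A * W"
    using h assoc_mult_mat[OF aW A W] by simp
  finally show ?thesis .
qed

theorem spectral: fixes A :: "complex mat"
  shows "A \<in> carrier_mat n n \<Longrightarrow> mat_adjoint A = A \<Longrightarrow>
    \<exists>Q. unitary_mat n Q \<and> (\<forall>k<n. \<forall>l<n. k \<noteq> l \<longrightarrow> (mat_adjoint Q * A * Q) $$ (k,l) = 0)"
proof (induction n arbitrary: A)
  case 0
  then show ?case using unitary_one[of 0] by blast
next
  case (Suc m)
  let ?n = "Suc m"
  have A: "A \<in> carrier_mat ?n ?n" and h: "mat_adjoint A = A" using Suc.prems by auto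
  obtain e v where v: "v \<in> carrier_vec ?n" "v \<noteq> 0\<^sub>v ?n" and ev: "A *\<^sub>v v = e \<cdot>\<^sub>v v"
    using eigvec_exists[OF A] by auto
  obtain W c where W: "unitary_mat ?n W" and Wc: "\<forall>p<?n. W $$ (p,0) = c * v $ p"
    using unitary_completion[OF v] by blast
  have Wm: "W \<in> carrier_mat ?n ?n" using W unitary_carrier by auto
  define B where "B = mat_adjoint W * A * W"
  have Bc: "B \<in> carrier_mat ?n ?n" unfolding B_def using mult_carrier_mat[OF mult_carrier_mat[OF adj_carrier[OF Wm] A] Wm] .
  have hB: "mat_adjoint B = B" unfolding B_def by (rule adj_triple_herm[OF Wm A h])
  have col: "\<forall>p. 0 < p \<and> p < ?n \<longrightarrow> B $$ (p,0) = 0"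
    using first_col[OF A W Wc v(1) ev] unfolding B_def by auto
  define C where "C = mat m m (\<lambda>(p,q). B $$ (Suc p, Suc q))"
  have Cc: "C \<in> carrier_mat m m" unfolding C_def by simp
  have hC: "mat_adjoint C = C"
  proof (rule eq_matI)
    fix p q assume "p < dim_row C" "q < dim_col C"
    then have p: "p < m" and q: "q < m" using Cc by auto
    have "mat_adjoint C $$ (p,q) = cnj (B $$ (Suc q, Suc p))" using p q Cc unfolding C_def by simp
    also have "\<dots> = B $$ (Suc p, Suc q)" using herm_entry[OF Bc hB, of "Suc q" "Suc p"] p q by simp
    finally show "mat_adjoint C $$ (p,q) = C $$ (p,q)" using p q unfolding C_def by simp
  qed (use Cc in auto)
  obtain VC where VC: "unitary_mat m VC" and D: "\<forall>k<m. \<forall>l<m. k \<noteq> l \<longrightarrow> (mat_adjoint VC * C * VC) $$ (k,l) = 0"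
    using Suc.IH[OF Cc hC] by blast
  obtain V where V: "unitary_mat ?n V" and DV: "\<forall>k<?n. \<forall>l<?n. k \<noteq> l \<longrightarrow> (mat_adjoint V * B * V) $$ (k,l) = 0"
    using block_ext[OF Bc hB col VC D[unfolded C_def]] by blast
  have Vm: "V \<in> carrier_mat ?n ?n" using V unitary_carrier by auto
  have "mat_adjoint (W * V) * A * (W * V) = mat_adjoint V * B * V"
    unfolding B_def by (rule conj_assoc[OF Wm Vm A])
  then show ?case using unitary_mult[OF W V] DV by metis
qed



lemma herm_diag_real: fixes A :: "complex mat"
  assumes "A \<in> carrier_mat n n" "mat_adjoint A = A" "k < n"
  shows "A $$ (k,k) = complex_of_real (Re (A $$ (k,k)))"
  using herm_entry[OF assms(1,2) assms(3) assms(3)] by (simp add: complex_eq_iff)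

context
  fixes n :: nat and S :: "complex mat"
  assumes S: "S \<in> carrier_mat n n" and hS: "mat_adjoint S = S"
begin

definition Dg :: "(nat \<Rightarrow> real) set" where
  "Dg = {x. \<exists>U. unitary_mat n U \<and> (\<forall>k<n. (mat_adjoint U * S * U) $$ (k,k) = complex_of_real (x k))}"

lemma D_congr: "x \<in> Dg \<Longrightarrow> \<forall>k<n. y k = x k \<Longrightarrow> y \<in> Dg"
  unfolding Dg_def by auto

lemma D_T: assumes x: "x \<in> Dg" and ij: "i < n" "j < n" "i \<noteq> j" and s: "0 \<le> s" "s \<le> 1"
  shows "x(i := (1-s) * x i + s * x j, j := s * x i + (1-s) * x j) \<in> Dg"
proof -
  obtain U where U: "unitary_mat n U" and xU: "\<forall>k<n. (mat_adjoint U * S * U) $$ (k,k) = complex_of_real (x k)"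
    using x unfolding Dg_def by blast
  have Um: "U \<in> carrier_mat n n" using U unitary_carrier by auto
  define A where "A = mat_adjoint U * S * U"
  have Ac: "A \<in> carrier_mat n n" unfolding A_def using mult_carrier_mat[OF mult_carrier_mat[OF adj_carrier[OF Um] S] Um] .
  have hA: "mat_adjoint A = A" unfolding A_def by (rule adj_triple_herm[OF Um S hS])
  obtain R where R: "unitary_mat n R" and Rd: "\<forall>k<n. (mat_adjoint R * A * R) $$ (k,k) =
     (if k = i then complex_of_real ((1-s) * Re (A $$ (i,i)) + s * Re (A $$ (j,j)))
      else if k = j then complex_of_real (s * Re (A $$ (i,i)) + (1-s) * Re (A $$ (j,j)))
      else A $$ (k,k))"
    using T_step[OF Ac hA ij(3) ij(1) ij(2) s] by blast
  have Rm: "R \<in> carrier_mat n n" using R unitary_carrier by auto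
  have eq: "mat_adjoint (U * R) * S * (U * R) = mat_adjoint R * A * R"
    unfolding A_def by (rule conj_assoc[OF Um Rm S])
  have ReA: "Re (A $$ (k,k)) = x k" if "k < n" for k using xU that unfolding A_def by simp
  show ?thesis unfolding Dg_def
  proof (intro CollectI exI conjI allI impI)
    show "unitary_mat n (U * R)" by (rule unitary_mult[OF U R])
    fix k assume k: "k < n"
    show "(mat_adjoint (U * R) * S * (U * R)) $$ (k,k) = complex_of_real ((x(i := (1-s) * x i + s * x j, j := s * x i + (1-s) * x j)) k)"
      unfolding eq using Rd k ij ReA xU unfolding A_def by auto
  qed
qed

lemma D_perm: assumes x: "x \<in> Dg" and sp: "\<sigma> permutes {..<n}" shows "(x \<circ> \<sigma>) \<in> Dg"
proof -
  obtain U where U: "unitary_mat n U" and xU: "\<forall>k<n. (mat_adjoint U * S * U) $$ (k,k) = complex_of_real (x k)"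
    using x unfolding Dg_def by blast
  have Um: "U \<in> carrier_mat n n" using U unitary_carrier by auto
  define A where "A = mat_adjoint U * S * U"
  have Ac: "A \<in> carrier_mat n n" unfolding A_def using mult_carrier_mat[OF mult_carrier_mat[OF adj_carrier[OF Um] S] Um] .
  have eq: "mat_adjoint (U * perm_mat n \<sigma>) * S * (U * perm_mat n \<sigma>) = mat_adjoint (perm_mat n \<sigma>) * A * perm_mat n \<sigma>"
    unfolding A_def by (rule conj_assoc[OF Um perm_mat_carrier S])
  show ?thesis unfolding Dg_def
  proof (intro CollectI exI conjI allI impI)
    show "unitary_mat n (U * perm_mat n \<sigma>)" by (rule unitary_mult[OF U perm_unitary[OF sp]])
    fix k assume k: "k < n"
    have sk: "\<sigma> k < n" using permutes_in_image[OF sp] k by simp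
    show "(mat_adjoint (U * perm_mat n \<sigma>) * S * (U * perm_mat n \<sigma>)) $$ (k,k) = complex_of_real ((x \<circ> \<sigma>) k)"
      unfolding eq perm_conj[OF sp Ac k k] using xU sk unfolding A_def by simp
  qed
qed

lemma spectral_sorted: "\<exists>Q lam. unitary_mat n Q \<and> dec n lam \<and>
   (\<forall>k<n. \<forall>l<n. (mat_adjoint Q * S * Q) $$ (k,l) = (if k = l then complex_of_real (lam k) else 0))"
proof -
  obtain Q0 where Q0: "unitary_mat n Q0" and off: "\<forall>k<n. \<forall>l<n. k \<noteq> l \<longrightarrow> (mat_adjoint Q0 * S * Q0) $$ (k,l) = 0"
    using spectral[OF S hS] by blast
  have Q0m: "Q0 \<in> carrier_mat n n" using Q0 unitary_carrier by auto
  define A where "A = mat_adjoint Q0 * S * Q0"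
  have Ac: "A \<in> carrier_mat n n" unfolding A_def using mult_carrier_mat[OF mult_carrier_mat[OF adj_carrier[OF Q0m] S] Q0m] .
  have hA: "mat_adjoint A = A" unfolding A_def by (rule adj_triple_herm[OF Q0m S hS])
  define lam0 where "lam0 = (\<lambda>k. Re (A $$ (k,k)))"
  obtain \<sigma> where sp: "\<sigma> permutes {..<n}" and ds: "dec n (lam0 \<circ> \<sigma>)" using sort_exists by blast
  define Q where "Q = Q0 * perm_mat n \<sigma>"
  have eq: "mat_adjoint Q * S * Q = mat_adjoint (perm_mat n \<sigma>) * A * perm_mat n \<sigma>"
    unfolding A_def Q_def by (rule conj_assoc[OF Q0m perm_mat_carrier S])
  have "\<forall>k<n. \<forall>l<n. (mat_adjoint Q * S * Q) $$ (k,l) = (if k = l then complex_of_real ((lam0 \<circ> \<sigma>) k) else 0)"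
  proof (intro allI impI)
    fix k l assume k: "k < n" and l: "l < n"
    have sk: "\<sigma> k < n" and sl: "\<sigma> l < n" using permutes_in_image[OF sp] k l by auto
    have inj: "(\<sigma> k = \<sigma> l) = (k = l)" using permutes_inj[OF sp] by (auto simp: inj_def)
    show "(mat_adjoint Q * S * Q) $$ (k,l) = (if k = l then complex_of_real ((lam0 \<circ> \<sigma>) k) else 0)"
      unfolding eq perm_conj[OF sp Ac k l] using off sk sl inj herm_diag_real[OF Ac hA sk]
      unfolding A_def lam0_def by auto
  qed
  then show ?thesis using unitary_mult[OF Q0 perm_unitary[OF sp]] ds unfolding Q_def by blast
qed

end



lemma cnj_sq: "cnj z * z = complex_of_real ((cmod z)\<^sup>2)"
  using complex_norm_square[of z] by (simp add: mult.commute)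

lemma z_cnj: "z * cnj z = complex_of_real ((cmod z)\<^sup>2)"
  using complex_norm_square[of z] by simp

lemma unitary_col_sum: assumes W: "unitary_mat n W" and k: "k < n"
  shows "(\<Sum>p<n. (cmod (W $$ (p,k)))\<^sup>2) = 1"
proof -
  have Wm: "W \<in> carrier_mat n n" using W unitary_carrier by auto
  have "(mat_adjoint W * W) $$ (k,k) = (\<Sum>p<n. mat_adjoint W $$ (k,p) * W $$ (p,k))"
    by (rule mult_entry[OF _ Wm k k]) (use Wm in simp)
  also have "\<dots> = (\<Sum>p<n. complex_of_real ((cmod (W $$ (p,k)))\<^sup>2))"
    by (rule sum.cong[OF refl]) (use Wm k in \<open>simp add: cnj_sq\<close>)
  finally have "complex_of_real (\<Sum>p<n. (cmod (W $$ (p,k)))\<^sup>2) = 1"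
    using W k unfolding unitary_mat_def by simp
  then show ?thesis by (metis of_real_eq_1_iff)
qed

lemma unitary_row_sum: assumes W: "unitary_mat n W" and p: "p < n"
  shows "(\<Sum>k<n. (cmod (W $$ (p,k)))\<^sup>2) = 1"
proof -
  have Wm: "W \<in> carrier_mat n n" using W unitary_carrier by auto
  have "(W * mat_adjoint W) $$ (p,p) = (\<Sum>k<n. W $$ (p,k) * mat_adjoint W $$ (k,p))"
    by (rule mult_entry[OF Wm _ p p]) (use Wm in simp)
  also have "\<dots> = (\<Sum>k<n. complex_of_real ((cmod (W $$ (p,k)))\<^sup>2))"
  proof (rule sum.cong[OF refl])
    fix k assume "k \<in> {..<n}"
    then have "mat_adjoint W $$ (k,p) = cnj (W $$ (p,k))" using Wm p by simp
    then show "W $$ (p,k) * mat_adjoint W $$ (k,p) = complex_of_real ((cmod (W $$ (p,k)))\<^sup>2)"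
      by (simp only: z_cnj)
  qed
  finally have "complex_of_real (\<Sum>k<n. (cmod (W $$ (p,k)))\<^sup>2) = 1"
    using W p unfolding unitary_mat_def by simp
  then show ?thesis by (metis of_real_eq_1_iff)
qed

lemma unitary_reconstruct: fixes Q S :: "complex mat"
  assumes Q: "unitary_mat n Q" and S: "S \<in> carrier_mat n n"
  shows "Q * (mat_adjoint Q * S * Q) * mat_adjoint Q = S"
proof -
  have Qm: "Q \<in> carrier_mat n n" using Q unitary_carrier by auto
  have aQ: "mat_adjoint Q \<in> carrier_mat n n" using Qm by simp
  have QQ: "Q * mat_adjoint Q = 1\<^sub>m n" using Q unfolding unitary_mat_def by simp
  have "Q * (mat_adjoint Q * S * Q) * mat_adjoint Q = Q * (mat_adjoint Q * S * Q * mat_adjoint Q)"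
    using assoc_mult_mat[OF Qm mult_carrier_mat[OF mult_carrier_mat[OF aQ S] Qm] aQ] .
  also have "mat_adjoint Q * S * Q * mat_adjoint Q = mat_adjoint Q * S * (Q * mat_adjoint Q)"
    using assoc_mult_mat[OF mult_carrier_mat[OF aQ S] Qm aQ] .
  also have "\<dots> = mat_adjoint Q * S" unfolding QQ by (rule right_mult_one_mat[OF mult_carrier_mat[OF aQ S]])
  also have "Q * (mat_adjoint Q * S) = (Q * mat_adjoint Q) * S" using assoc_mult_mat[OF Qm aQ S] by simp
  also have "\<dots> = S" unfolding QQ by (rule left_mult_one_mat[OF S])
  finally show ?thesis .
qed

lemma diag_formula: fixes Q S U :: "complex mat"
  assumes S: "S \<in> carrier_mat n n" and Q: "unitary_mat n Q"
    and Lam: "\<forall>k<n. \<forall>l<n. (mat_adjoint Q * S * Q) $$ (k,l) = (if k = l then complex_of_real (lam k) else 0)"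
    and U: "unitary_mat n U" and k: "k < n"
  shows "(mat_adjoint U * S * U) $$ (k,k) = complex_of_real (\<Sum>p<n. lam p * (cmod ((mat_adjoint Q * U) $$ (p,k)))\<^sup>2)"
proof -
  have Qm: "Q \<in> carrier_mat n n" using Q unitary_carrier by auto
  have Um: "U \<in> carrier_mat n n" using U unitary_carrier by auto
  have aQ: "mat_adjoint Q \<in> carrier_mat n n" using Qm by simp
  define L where "L = mat_adjoint Q * S * Q"
  have Lm: "L \<in> carrier_mat n n" unfolding L_def using mult_carrier_mat[OF mult_carrier_mat[OF aQ S] Qm] .
  define W where "W = mat_adjoint Q * U"
  have Wm: "W \<in> carrier_mat n n" unfolding W_def using mult_carrier_mat[OF aQ Um] .
  have "mat_adjoint W * L * W = mat_adjoint U * (mat_adjoint (mat_adjoint Q) * L * mat_adjoint Q) * U"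
    unfolding W_def by (rule conj_assoc[OF aQ Um Lm])
  also have "mat_adjoint (mat_adjoint Q) * L * mat_adjoint Q = S"
    unfolding L_def adj_adj by (rule unitary_reconstruct[OF Q S])
  finally have eq: "mat_adjoint U * S * U = mat_adjoint W * L * W" by simp
  have "(mat_adjoint W * L * W) $$ (k,k) = (\<Sum>p<n. \<Sum>q<n. cnj (W $$ (p,k)) * L $$ (p,q) * W $$ (q,k))"
    by (rule triple_entry[OF Wm Lm Wm k k])
  also have "\<dots> = (\<Sum>p<n. complex_of_real (lam p * (cmod (W $$ (p,k)))\<^sup>2))"
  proof (rule sum.cong[OF refl])
    fix p assume "p \<in> {..<n}"
    then have p: "p < n" by simp
    have "(\<Sum>q<n. cnj (W $$ (p,k)) * L $$ (p,q) * W $$ (q,k)) = (\<Sum>q<n. if q = p then cnj (W $$ (p,k)) * complex_of_real (lam p) * W $$ (p,k) else 0)"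
      by (rule sum.cong[OF refl]) (use Lam p in \<open>auto simp: L_def\<close>)
    also have "\<dots> = cnj (W $$ (p,k)) * complex_of_real (lam p) * W $$ (p,k)" using p by simp
    also have "\<dots> = complex_of_real (lam p) * (cnj (W $$ (p,k)) * W $$ (p,k))" by (simp add: algebra_simps)
    also have "\<dots> = complex_of_real (lam p * (cmod (W $$ (p,k)))\<^sup>2)" unfolding cnj_sq by simp
    finally show "(\<Sum>q<n. cnj (W $$ (p,k)) * L $$ (p,q) * W $$ (q,k)) = complex_of_real (lam p * (cmod (W $$ (p,k)))\<^sup>2)" .
  qed
  also have "\<dots> = complex_of_real (\<Sum>p<n. lam p * (cmod (W $$ (p,k)))\<^sup>2)" by simp
  finally show ?thesis unfolding eq W_def .
qed



context
  fixes n :: nat and S :: "complex mat"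
  assumes S: "S \<in> carrier_mat n n" and hS: "mat_adjoint S = S"
begin

lemma D_maj: assumes Q: "unitary_mat n Q"
    and Lam: "\<forall>k<n. \<forall>l<n. (mat_adjoint Q * S * Q) $$ (k,l) = (if k = l then complex_of_real (lam k) else 0)"
    and dl: "dec n lam" and x: "x \<in> Dg n S" and I: "I \<subseteq> {..<n}"
  shows "(\<Sum>k\<in>I. x k) \<le> psum lam (card I)" and "(\<Sum>k<n. x k) = psum lam n"
proof -
  obtain U where U: "unitary_mat n U" and xU: "\<forall>k<n. (mat_adjoint U * S * U) $$ (k,k) = complex_of_real (x k)"
    using x unfolding Dg_def[OF S hS] by blast
  define W where "W = mat_adjoint Q * U"
  have W: "unitary_mat n W" unfolding W_def by (rule unitary_mult[OF unitary_adj[OF Q] U])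
  define P where "P = (\<lambda>p k. (cmod (W $$ (p,k)))\<^sup>2)"
  have xk: "x k = (\<Sum>p<n. lam p * P p k)" if k: "k < n" for k
  proof -
    have "complex_of_real (x k) = complex_of_real (\<Sum>p<n. lam p * P p k)"
      using diag_formula[OF S Q Lam U k] xU k unfolding P_def W_def by metis
    then show ?thesis by (simp only: of_real_eq_iff)
  qed
  have P0: "0 \<le> P p k" for p k unfolding P_def by simp
  have rows: "(\<Sum>k<n. P p k) = 1" if "p < n" for p unfolding P_def by (rule unitary_row_sum[OF W that])
  have cols: "(\<Sum>p<n. P p k) = 1" if "k < n" for k unfolding P_def by (rule unitary_col_sum[OF W that])
  have gen: "(\<Sum>k\<in>J. x k) = (\<Sum>p<n. (\<Sum>k\<in>J. P p k) * lam p)" if J: "J \<subseteq> {..<n}" for J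
  proof -
    have "(\<Sum>k\<in>J. x k) = (\<Sum>k\<in>J. \<Sum>p<n. lam p * P p k)" by (rule sum.cong[OF refl]) (use J xk in auto)
    also have "\<dots> = (\<Sum>p<n. \<Sum>k\<in>J. lam p * P p k)" by (rule sum.swap)
    also have "\<dots> = (\<Sum>p<n. (\<Sum>k\<in>J. P p k) * lam p)" by (simp add: sum_distrib_left mult.commute)
    finally show ?thesis .
  qed
  have finI: "finite I" using I finite_subset by blast
  have cI: "\<forall>p<n. 0 \<le> (\<Sum>k\<in>I. P p k) \<and> (\<Sum>k\<in>I. P p k) \<le> 1"
  proof (intro allI impI conjI)
    fix p assume p: "p < n"
    show "0 \<le> (\<Sum>k\<in>I. P p k)" by (rule sum_nonneg) (use P0 in auto)
    have "(\<Sum>k\<in>I. P p k) \<le> (\<Sum>k<n. P p k)" by (rule sum_mono2) (use I P0 in auto)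
    then show "(\<Sum>k\<in>I. P p k) \<le> 1" using rows[OF p] by simp
  qed
  have csum: "(\<Sum>p<n. \<Sum>k\<in>I. P p k) = real (card I)"
  proof -
    have "(\<Sum>p<n. \<Sum>k\<in>I. P p k) = (\<Sum>k\<in>I. \<Sum>p<n. P p k)" by (rule sum.swap)
    also have "\<dots> = (\<Sum>k\<in>I. 1)" by (rule sum.cong[OF refl]) (use I cols in auto)
    finally show ?thesis by simp
  qed
  have cardI: "card I \<le> n" using card_mono[OF _ I] by simp
  show "(\<Sum>k\<in>I. x k) \<le> psum lam (card I)"
    unfolding gen[OF I] by (rule schur_bound[OF dl cI csum cardI])
  have "(\<Sum>k<n. x k) = (\<Sum>p<n. (\<Sum>k<n. P p k) * lam p)" by (rule gen) simp
  also have "\<dots> = (\<Sum>p<n. lam p)" by (rule sum.cong[OF refl]) (use rows in auto)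
  finally show "(\<Sum>k<n. x k) = psum lam n" unfolding psum_def .
qed

lemma maj_D: assumes Q: "unitary_mat n Q"
    and Lam: "\<forall>k<n. \<forall>l<n. (mat_adjoint Q * S * Q) $$ (k,l) = (if k = l then complex_of_real (lam k) else 0)"
    and dl: "dec n lam" and tot: "(\<Sum>k<n. y k) = psum lam n"
    and part: "\<forall>I. I \<subseteq> {..<n} \<longrightarrow> (\<Sum>k\<in>I. y k) \<le> psum lam (card I)"
  shows "y \<in> Dg n S"
proof -
  have lamD: "lam \<in> Dg n S" unfolding Dg_def[OF S hS] using Q Lam by auto
  obtain \<sigma> where sp: "\<sigma> permutes {..<n}" and dy: "dec n (y \<circ> \<sigma>)" using sort_exists by blast
  have inj: "inj_on \<sigma> A" for A using permutes_inj_on[OF sp] .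
  have ps: "psum (y \<circ> \<sigma>) l = (\<Sum>k\<in>\<sigma> ` {..<l}. y k)" for l
    unfolding psum_def by (rule sum.reindex[OF inj, symmetric])
  have img: "\<sigma> ` {..<l} \<subseteq> {..<n}" if "l \<le> n" for l
  proof
    fix z assume "z \<in> \<sigma> ` {..<l}"
    then obtain w where "w < l" "z = \<sigma> w" by auto
    then show "z \<in> {..<n}" using permutes_in_image[OF sp, of w] that by simp
  qed
  have cimg: "card (\<sigma> ` {..<l}) = l" for l using card_image[OF inj, of "{..<l}"] by simp
  have ps1: "\<forall>l\<le>n. psum (y \<circ> \<sigma>) l \<le> psum lam l"
  proof (intro allI impI)
    fix l assume l: "l \<le> n"
    have "(\<Sum>k\<in>\<sigma> ` {..<l}. y k) \<le> psum lam (card (\<sigma> ` {..<l}))" using part img[OF l] by blast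
    then show "psum (y \<circ> \<sigma>) l \<le> psum lam l" unfolding ps cimg .
  qed
  have "\<sigma> ` {..<n} = {..<n}" by (rule permutes_image[OF sp])
  then have ps2: "psum (y \<circ> \<sigma>) n = psum lam n" unfolding ps using tot by simp
  have "y \<circ> \<sigma> \<in> Dg n S"
    by (rule hlp[of "Dg n S" n, OF D_T[OF S hS] D_congr[OF S hS] lamD dl dy ps1 ps2])
  then have "(y \<circ> \<sigma>) \<circ> inv_into UNIV \<sigma> \<in> Dg n S" by (rule D_perm[OF S hS _ permutes_inv[OF sp]])
  moreover have "\<forall>k<n. y k = ((y \<circ> \<sigma>) \<circ> inv_into UNIV \<sigma>) k" using permutes_inverses(1)[OF sp] by simp
  ultimately show ?thesis using D_congr[OF S hS] by blast
qed

lemma Dg_convex: assumes x: "x \<in> Dg n S" and y: "y \<in> Dg n S" and t: "0 \<le> t" "t \<le> 1"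
  shows "(\<lambda>k. (1-t) * x k + t * y k) \<in> Dg n S"
proof -
  obtain Q lam where Q: "unitary_mat n Q" and dl: "dec n lam"
    and Lam: "\<forall>k<n. \<forall>l<n. (mat_adjoint Q * S * Q) $$ (k,l) = (if k = l then complex_of_real (lam k) else 0)"
    using spectral_sorted[OF S hS] by blast
  show ?thesis
  proof (rule maj_D[OF Q Lam dl])
    show "(\<Sum>k<n. (1-t) * x k + t * y k) = psum lam n"
    proof -
      have "(\<Sum>k<n. (1-t) * x k + t * y k) = (1-t) * (\<Sum>k<n. x k) + t * (\<Sum>k<n. y k)"
        by (simp add: sum.distrib sum_distrib_left)
      also have "\<dots> = (1-t) * psum lam n + t * psum lam n"
        using D_maj(2)[OF Q Lam dl x, of "{}"] D_maj(2)[OF Q Lam dl y, of "{}"] by simp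
      also have "\<dots> = psum lam n" by (simp add: algebra_simps)
      finally show ?thesis .
    qed
    show "\<forall>I. I \<subseteq> {..<n} \<longrightarrow> (\<Sum>k\<in>I. (1-t) * x k + t * y k) \<le> psum lam (card I)"
    proof (intro allI impI)
      fix I assume I: "I \<subseteq> {..<n}"
      have a: "(\<Sum>k\<in>I. x k) \<le> psum lam (card I)" by (rule D_maj(1)[OF Q Lam dl x I])
      have b: "(\<Sum>k\<in>I. y k) \<le> psum lam (card I)" by (rule D_maj(1)[OF Q Lam dl y I])
      have "(\<Sum>k\<in>I. (1-t) * x k + t * y k) = (1-t) * (\<Sum>k\<in>I. x k) + t * (\<Sum>k\<in>I. y k)"
        by (simp add: sum.distrib sum_distrib_left)
      also have "\<dots> \<le> (1-t) * psum lam (card I) + t * psum lam (card I)"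
        using mult_left_mono[OF a, of "1-t"] mult_left_mono[OF b t(1)] t by simp
      also have "\<dots> = psum lam (card I)" by (simp add: algebra_simps)
      finally show "(\<Sum>k\<in>I. (1-t) * x k + t * y k) \<le> psum lam (card I)" .
    qed
  qed
qed

end



lemma rank1_entry: assumes W: "W \<in> carrier_mat n n" and a: "a < n" and j: "j < n" and k: "k < n"
  shows "(mat_adjoint W * mat n n (\<lambda>(p,q). if p = a \<and> q = a then 1 else 0) * W) $$ (j,k)
         = cnj (W $$ (a,j)) * W $$ (a,k)"
proof -
  let ?S = "mat n n (\<lambda>(p,q). if p = a \<and> q = a then (1::complex) else 0)"
  have S: "?S \<in> carrier_mat n n" by simp
  have "(mat_adjoint W * ?S * W) $$ (j,k) = (\<Sum>p<n. \<Sum>q<n. cnj (W $$ (p,j)) * ?S $$ (p,q) * W $$ (q,k))"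
    by (rule triple_entry[OF W S W j k])
  also have "\<dots> = (\<Sum>p<n. if p = a then cnj (W $$ (a,j)) * W $$ (a,k) else 0)"
  proof (rule sum.cong[OF refl])
    fix p assume p: "p \<in> {..<n}"
    have "(\<Sum>q<n. cnj (W $$ (p,j)) * ?S $$ (p,q) * W $$ (q,k)) =
      (\<Sum>q<n. if q = a then (if p = a then cnj (W $$ (a,j)) * W $$ (a,k) else 0) else 0)"
      by (rule sum.cong[OF refl]) (use p in auto)
    also have "\<dots> = (if p = a then cnj (W $$ (a,j)) * W $$ (a,k) else 0)" using a by simp
    finally show "(\<Sum>q<n. cnj (W $$ (p,j)) * ?S $$ (p,q) * W $$ (q,k)) = (if p = a then cnj (W $$ (a,j)) * W $$ (a,k) else 0)" .
  qed
  also have "\<dots> = cnj (W $$ (a,j)) * W $$ (a,k)" using a by simp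
  finally show ?thesis .
qed

lemma psd_E: assumes a: "a < n" shows "psd_mat n (mat n n (\<lambda>(p,q). if p = a \<and> q = a then 1 else 0))"
proof -
  let ?S = "mat n n (\<lambda>(p,q). if p = a \<and> q = a then (1::complex) else 0)"
  have adj: "mat_adjoint ?S = ?S" by (rule eq_matI) auto
  have q: "conjugate x \<bullet> (?S *\<^sub>v x) = cnj (x $ a) * x $ a" if x: "x \<in> carrier_vec n" for x
  proof -
    have "conjugate x \<bullet> (?S *\<^sub>v x) = (\<Sum>j\<in>{0..<n}. conjugate x $ j * (?S *\<^sub>v x) $ j)"
      using x by (simp add: scalar_prod_def)
    also have "\<dots> = (\<Sum>j\<in>{0..<n}. if j = a then cnj (x $ a) * x $ a else 0)"
    proof (rule sum.cong[OF refl])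
      fix j assume j: "j \<in> {0..<n}"
      have "(?S *\<^sub>v x) $ j = row ?S j \<bullet> x" using j by simp
      also have "\<dots> = (\<Sum>l\<in>{0..<n}. (if l = a then (if j = a then x $ a else 0) else 0))"
        using j x unfolding scalar_prod_def by (intro sum.cong) auto
      also have "\<dots> = (if j = a then x $ a else 0)" using a by simp
      finally show "conjugate x $ j * (?S *\<^sub>v x) $ j = (if j = a then cnj (x $ a) * x $ a else 0)"
        using j x by simp
    qed
    also have "\<dots> = cnj (x $ a) * x $ a" using a by simp
    finally show ?thesis .
  qed
  have "cnj z * z = complex_of_real ((Re z)\<^sup>2 + (Im z)\<^sup>2)" for z :: complex
    using complex_mult_cnj[of z] by (simp add: mult.commute)
  then show ?thesis unfolding psd_mat_def using adj q by simp
qed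

lemma dir1: assumes d1: "\<forall>i < length d. d ! i \<ge> 1" and sd: "sum_list d = n"
  and conv: "\<forall>S. psd_mat n S \<longrightarrow> convex_mat_set (pinching n d ` unitary_orbit n S)"
  shows "\<forall>i < length d. d ! i = 1"
proof (rule ccontr)
  assume "\<not> (\<forall>i < length d. d ! i = 1)"
  then obtain i0 where i0: "i0 < length d" "d ! i0 \<noteq> 1" by auto
  then have d2: "d ! i0 \<ge> 2" using d1 by force
  define a where "a = block_start d i0"
  define b where "b = Suc a"
  have bn: "b < n" using block_end_le[OF i0(1)] d2 sd unfolding a_def b_def by simp
  have an: "a < n" using bn b_def by simp
  have ab: "a \<noteq> b" unfolding b_def by simp
  have ablk: "a \<in> block d i0" "b \<in> block d i0" using d2 unfolding block_def a_def b_def by auto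
  define S where "S = mat n n (\<lambda>(p,q). if p = a \<and> q = a then (1::complex) else 0)"
  have S: "S \<in> carrier_mat n n" unfolding S_def by simp
  have psd: "psd_mat n S" unfolding S_def by (rule psd_E[OF an])
  define \<sigma> where "\<sigma> = Transposition.transpose a b"
  have sp: "\<sigma> permutes {..<n}" unfolding \<sigma>_def using an bn by (intro permutes_swap_id) auto
  define T where "T = mat_adjoint (perm_mat n \<sigma>) * S * perm_mat n \<sigma>"
  have T: "T \<in> carrier_mat n n" unfolding T_def using S perm_mat_carrier by (auto intro!: mult_carrier_mat)
  have Te: "T $$ (j,k) = (if j = b \<and> k = b then 1 else 0)" if "j < n" "k < n" for j k
  proof -
    have "T $$ (j,k) = S $$ (\<sigma> j, \<sigma> k)" unfolding T_def by (rule perm_conj[OF sp S that])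
    also have "\<dots> = (if \<sigma> j = a \<and> \<sigma> k = a then 1 else 0)"
      using permutes_in_image[OF sp] that unfolding S_def by auto
    also have "\<dots> = (if j = b \<and> k = b then 1 else 0)" unfolding \<sigma>_def
      using ab by (auto simp: Transposition.transpose_def)
    finally show ?thesis .
  qed
  have Se: "S $$ (j,k) = (if j = a \<and> k = a then 1 else 0)" if "j < n" "k < n" for j k
    using that unfolding S_def by simp
  have SO: "S \<in> unitary_orbit n S" unfolding unitary_orbit_def
    using unitary_one[of n] S by (auto intro!: exI[of _ "1\<^sub>m n"])
  have TO: "T \<in> unitary_orbit n S" unfolding unitary_orbit_def T_def using perm_unitary[OF sp] by auto
  let ?X = "pinching n d S" and ?Y = "pinching n d T"
  have X: "?X \<in> carrier_mat n n" and Y: "?Y \<in> carrier_mat n n" using pinching_carrier S T by auto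
  have "convex_mat_set (pinching n d ` unitary_orbit n S)" using conv psd by simp
  then have "complex_of_real (1 - 1/2) \<cdot>\<^sub>m ?X + complex_of_real (1/2) \<cdot>\<^sub>m ?Y \<in> pinching n d ` unitary_orbit n S"
  proof -
    have c: "\<forall>X \<in> pinching n d ` unitary_orbit n S. \<forall>Y \<in> pinching n d ` unitary_orbit n S. \<forall>t::real. 0 \<le> t \<and> t \<le> 1 \<longrightarrow>
      complex_of_real (1 - t) \<cdot>\<^sub>m X + complex_of_real t \<cdot>\<^sub>m Y \<in> pinching n d ` unitary_orbit n S"
      using \<open>convex_mat_set (pinching n d ` unitary_orbit n S)\<close> unfolding convex_mat_set_def by blast
    show ?thesis using c[rule_format, OF imageI[OF SO] imageI[OF TO], of "1/2"] by simp
  qed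
  then obtain W where W: "unitary_mat n W"
    and M: "complex_of_real (1 - 1/2) \<cdot>\<^sub>m ?X + complex_of_real (1/2) \<cdot>\<^sub>m ?Y = pinching n d (mat_adjoint W * S * W)"
    unfolding unitary_orbit_def by auto
  have Wc: "W \<in> carrier_mat n n" using W unitary_carrier by auto
  have WSW: "mat_adjoint W * S * W \<in> carrier_mat n n" using Wc S by auto
  have inblk: "\<exists>i<length d. j \<in> block d i \<and> k \<in> block d i" if "j \<in> {a,b}" "k \<in> {a,b}" for j k
    using i0 ablk that by auto
  have key: "cnj (W $$ (a,j)) * W $$ (a,k) = complex_of_real (1/2) * T $$ (j,k) + complex_of_real (1/2) * S $$ (j,k)"
    if jk: "j \<in> {a,b}" "k \<in> {a,b}" for j k
  proof -
    have jn: "j < n" and kn: "k < n" using jk an bn by auto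
    have "cnj (W $$ (a,j)) * W $$ (a,k) = (mat_adjoint W * S * W) $$ (j,k)"
      unfolding S_def by (rule rank1_entry[OF Wc an jn kn, symmetric])
    also have "\<dots> = pinching n d (mat_adjoint W * S * W) $$ (j,k)"
      using pinching_entry[OF WSW jn kn] inblk[OF jk] by simp
    also have "\<dots> = (complex_of_real (1 - 1/2) \<cdot>\<^sub>m ?X + complex_of_real (1/2) \<cdot>\<^sub>m ?Y) $$ (j,k)"
      using M by simp
    also have "\<dots> = complex_of_real (1/2) * ?X $$ (j,k) + complex_of_real (1/2) * ?Y $$ (j,k)"
      using X Y jn kn by simp
    also have "\<dots> = complex_of_real (1/2) * S $$ (j,k) + complex_of_real (1/2) * T $$ (j,k)"
      using pinching_entry[OF S jn kn] pinching_entry[OF T jn kn] inblk[OF jk] by simp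
    finally show ?thesis by simp
  qed
  have k1: "cnj (W $$ (a,a)) * W $$ (a,a) = 1/2" using key[of a a] Se[OF an an] Te[OF an an] ab by simp
  have k2: "cnj (W $$ (a,b)) * W $$ (a,b) = 1/2" using key[of b b] Se[OF bn bn] Te[OF bn bn] ab by simp
  have k3: "cnj (W $$ (a,a)) * W $$ (a,b) = 0" using key[of a b] Se[OF an bn] Te[OF an bn] ab by simp
  from k3 have "W $$ (a,a) = 0 \<or> W $$ (a,b) = 0" by simp
  then show False using k1 k2 by auto
qed



lemma ones_sum: "\<forall>i<length d. d ! i = (1::nat) \<Longrightarrow> sum_list d = length d"
proof -
  assume "\<forall>i<length d. d ! i = (1::nat)"
  then have "d = replicate (length d) 1" by (simp add: list_eq_iff_nth_eq)
  then have "sum_list d = sum_list (replicate (length d) (1::nat))" by (rule arg_cong)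
  also have "\<dots> = length d" by (simp add: sum_list_replicate)
  finally show ?thesis .
qed

lemma dir2: assumes d: "\<forall>i<length d. d ! i = 1" and sd: "sum_list d = n"
  shows "\<forall>S. psd_mat n S \<longrightarrow> convex_mat_set (pinching n d ` unitary_orbit n S)"
proof (intro allI impI)
  fix S assume psd: "psd_mat n S"
  have S: "S \<in> carrier_mat n n" and hS: "mat_adjoint S = S" using psd unfolding psd_mat_def by auto
  have nd: "n = length d" using ones_sum[OF d] sd by simp
  have orb: "\<exists>U. unitary_mat n U \<and> A = mat_adjoint U * S * U" if "A \<in> unitary_orbit n S" for A
    using that unfolding unitary_orbit_def by auto
  have Ac: "mat_adjoint U * S * U \<in> carrier_mat n n" if "unitary_mat n U" for U
  proof -
    have Um: "U \<in> carrier_mat n n" using that unitary_carrier by auto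
    show ?thesis using mult_carrier_mat[OF mult_carrier_mat[OF adj_carrier[OF Um] S] Um] .
  qed
  have inD: "(\<lambda>k. Re ((mat_adjoint U * S * U) $$ (k,k))) \<in> Dg n S" if U: "unitary_mat n U" for U
  proof -
    have Um: "U \<in> carrier_mat n n" using U unitary_carrier by auto
    have h: "mat_adjoint (mat_adjoint U * S * U) = mat_adjoint U * S * U" by (rule adj_triple_herm[OF Um S hS])
    show ?thesis unfolding Dg_def[OF S hS] using U herm_diag_real[OF Ac[OF U] h] by blast
  qed
  show "convex_mat_set (pinching n d ` unitary_orbit n S)"
    unfolding convex_mat_set_def
  proof (intro ballI allI impI)
    fix X Y and t :: real
    assume X: "X \<in> pinching n d ` unitary_orbit n S" and Y: "Y \<in> pinching n d ` unitary_orbit n S"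
      and t: "0 \<le> t \<and> t \<le> 1"
    obtain U where U: "unitary_mat n U" and XU: "X = pinching n d (mat_adjoint U * S * U)"
      using X orb by blast
    obtain V where V: "unitary_mat n V" and YV: "Y = pinching n d (mat_adjoint V * S * V)"
      using Y orb by blast
    define x where "x = (\<lambda>k. Re ((mat_adjoint U * S * U) $$ (k,k)))"
    define y where "y = (\<lambda>k. Re ((mat_adjoint V * S * V) $$ (k,k)))"
    have "(\<lambda>k. (1-t) * x k + t * y k) \<in> Dg n S"
      unfolding x_def y_def by (rule Dg_convex[OF S hS inD[OF U] inD[OF V]]) (use t in auto)
    then obtain W where W: "unitary_mat n W"
      and Wd: "\<forall>k<n. (mat_adjoint W * S * W) $$ (k,k) = complex_of_real ((1-t) * x k + t * y k)"
      unfolding Dg_def[OF S hS] by blast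
    have xr: "(mat_adjoint U * S * U) $$ (k,k) = complex_of_real (x k)" if "k < n" for k
      unfolding x_def using herm_diag_real[OF Ac[OF U] adj_triple_herm[OF unitary_carrier[OF U] S hS] that] .
    have yr: "(mat_adjoint V * S * V) $$ (k,k) = complex_of_real (y k)" if "k < n" for k
      unfolding y_def using herm_diag_real[OF Ac[OF V] adj_triple_herm[OF unitary_carrier[OF V] S hS] that] .
    have Xc: "X \<in> carrier_mat n n" unfolding XU by (rule pinching_carrier[OF Ac[OF U]])
    have Yc: "Y \<in> carrier_mat n n" unfolding YV by (rule pinching_carrier[OF Ac[OF V]])
    have "complex_of_real (1 - t) \<cdot>\<^sub>m X + complex_of_real t \<cdot>\<^sub>m Y = pinching n d (mat_adjoint W * S * W)"
    proof (rule eq_matI)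
      fix j k assume "j < dim_row (pinching n d (mat_adjoint W * S * W))" "k < dim_col (pinching n d (mat_adjoint W * S * W))"
      moreover have pc: "pinching n d (mat_adjoint W * S * W) \<in> carrier_mat n n" by (rule pinching_carrier[OF Ac[OF W]])
      ultimately have j: "j < n" and k: "k < n" by simp_all
      have lhs: "(complex_of_real (1 - t) \<cdot>\<^sub>m X + complex_of_real t \<cdot>\<^sub>m Y) $$ (j,k) =
          complex_of_real (1 - t) * X $$ (j,k) + complex_of_real t * Y $$ (j,k)"
        using Xc Yc j k by simp
      show "(complex_of_real (1 - t) \<cdot>\<^sub>m X + complex_of_real t \<cdot>\<^sub>m Y) $$ (j,k) = pinching n d (mat_adjoint W * S * W) $$ (j,k)"
        unfolding lhs unfolding XU YV
        unfolding pinching_ones_entry[OF d Ac[OF U] nd j k] pinching_ones_entry[OF d Ac[OF V] nd j k]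
          pinching_ones_entry[OF d Ac[OF W] nd j k]
        using xr[OF j] yr[OF j] Wd j by (cases "j = k") simp_all
    qed (use Xc Yc pinching_carrier[OF Ac[OF W], of d] in simp_all)
    moreover have "mat_adjoint W * S * W \<in> unitary_orbit n S" unfolding unitary_orbit_def using W by auto
    ultimately show "complex_of_real (1 - t) \<cdot>\<^sub>m X + complex_of_real t \<cdot>\<^sub>m Y \<in> pinching n d ` unitary_orbit n S"
      by simp
  qed
qed

theorem proposition3p4:
  fixes n :: nat and d :: "nat list"
  assumes "\<forall>i < length d. d ! i \<ge> 1"
    and "sum_list d = n"
  shows "(\<forall>S. psd_mat n S \<longrightarrow> convex_mat_set (pinching n d ` unitary_orbit n S))
         \<longleftrightarrow> (\<forall>i < length d. d ! i = 1)"
  using dir1[OF assms] dir2[OF _ assms(2)] by blast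


end
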